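(* In the setting of the context with equal cluster sizes $n_1=\dots=n_k=n/k$, suppose $n\ge\frac{2k(1-\eta)}{1-2\eta}$. Then: (1) If $\tau^+>0,\tau^-\ge0$ satisfy $\tau^+>\frac{32\eta k}{3(1-2\eta)}$ and $\tau^-<\min\{\frac32,\frac3{16}\tau^+,\frac{3(1-\eta)}{8(\eta+\frac{1-2\eta}k)}\}$, then $V_k(\bar T)=\Theta R$ for a $k\times k$ rotation $R$, and $\|(C_e^-)^{-1/2}C_e^+(C_e^-)^{-1/2}\|<\left(1-\frac{1-2\eta}{2k(1-\eta)}\right)\frac{\alpha^+}{\alpha^-}$, i.e. $\lambda_{n-k}(\bar T)-\lambda_{n-k+1}(\bar T)>\frac{1-2\eta}{2k(1-\eta)}\frac{\alpha^+}{\alpha^-}$. (2) If $\eta<\frac1{3k+2}$ and $\tau^+>0,\tau^-\ge0$ satisfy $\tau^-<\min\left\{\frac{\frac{1-2\eta}k-\eta}{\frac{1-2\eta}k+\eta},\frac12,\frac{\tau^+}8\right\}$, then $V_k(\bar T)=\Theta R$ and $\|(C_e^-)^{-1/2}C_e^+(C_e^-)^{-1/2}\|<\frac{\alpha^+}{2\alpha^-}$, i.e. $\lambda_{n-k}(\bar T)-\lambda_{n-k+1}(\bar T)>\frac{\alpha^+}{2\alpha^-}$.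
   Context: SSBM: integers $n\ge2$, $k\ge2$, $p\in(0,1]$, $\eta\in[0,1/2)$, partition of $[n]$ into clusters $C_1,\dots,C_k$ each of size $n/k$; edges present independently w.p. $p$, signed $+1$ within and $-1$ across clusters, signs flipped independently w.p. $\eta$. $A^\pm$ positive/negative adjacency matrices, $D^\pm=\mathrm{diag}(A^\pm\mathbf1)$. $\Theta_{ji}=\sqrt{k/n}$ if $j\in C_i$ else 0. $\overline{L^\pm_{sym}}=I-(\mathbb ED^\pm)^{-1/2}\mathbb EA^\pm(\mathbb ED^\pm)^{-1/2}$, $\bar T=(\overline{L^-_{sym}}+\tau^+I)^{-1/2}(\overline{L^+_{sym}}+\tau^-I)(\overline{L^-_{sym}}+\tau^+I)^{-1/2}$, eigenvalues $\lambda_1(\bar T)\ge\dots\ge\lambda_n(\bar T)$, $V_k(\bar T)$ orthonormal eigenvectors of the $k$ smallest. Expected degrees $d^+=p(\frac nk(1-2\eta)+n\eta-(1-\eta))$, $d^-=p(n(1-\eta)-\frac nk(1-2\eta)-\eta)$; $\alpha^+=1+\tau^-+p(1-\eta)/d^+$, $\alpha^-=1+\tau^++p\eta/d^-$. With $\chi_1=\frac1{\sqrt k}\mathbf1_k$: $C_e^+=-p\eta\frac n{d^+}\chi_1\chi_1^\top+\big(1+\tau^-+\frac p{d^+}(1-\eta-\frac nk(1-2\eta))\big)I_k$, $C_e^-=-p(1-\eta)\frac n{d^-}\chi_1\chi_1^\top+\big(1+\tau^++\frac p{d^-}(\eta+\frac nk(1-2\eta))\big)I_k$. *)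

theory Defs
  imports "Jordan_Normal_Form.Char_Poly"
begin

definition vnorm :: "real vec \<Rightarrow> real" where
  "vnorm v = sqrt (v \<bullet> v)"

definition op_norm :: "real mat \<Rightarrow> real" where
  "op_norm M = Sup {vnorm (M *\<^sub>v v) | v. v \<in> carrier_vec (dim_col M) \<and> vnorm v = 1}"

definition posdef :: "real mat \<Rightarrow> bool" where
  "posdef S \<longleftrightarrow> (\<forall>v \<in> carrier_vec (dim_row S). v \<noteq> 0\<^sub>v (dim_row S) \<longrightarrow> v \<bullet> (S *\<^sub>v v) > 0)"

definition mat_inv_sqrt :: "real mat \<Rightarrow> real mat" where
  "mat_inv_sqrt A = (THE S. S \<in> carrier_mat (dim_row A) (dim_row A) \<and> transpose_mat S = S
      \<and> posdef S \<and> S * S * A = 1\<^sub>m (dim_row A))"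

text \<open>Eigenvalues (with algebraic multiplicity) of a real square matrix all of whose
  eigenvalues are real, listed in non-increasing order:
  \<open>eigvals_desc A ! (i-1) = \<lambda>_i(A)\<close>, so \<open>\<lambda>_1 \<ge> \<dots> \<ge> \<lambda>_n\<close>.\<close>
definition eigvals_desc :: "real mat \<Rightarrow> real list" where
  "eigvals_desc A = (THE ls. length ls = dim_row A \<and> sorted_wrt (\<ge>) ls
      \<and> char_poly A = prod_list (map (\<lambda>a. [:- a, 1:]) ls))"

definition deg_mat :: "real mat \<Rightarrow> real mat" where
  "deg_mat A = mat (dim_row A) (dim_row A)
      (\<lambda>(i,j). if i = j then (\<Sum>l<dim_col A. A $$ (i,l)) else 0)"

definition sym_laplacian :: "real mat \<Rightarrow> real mat \<Rightarrow> real mat" where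
  "sym_laplacian D A = 1\<^sub>m (dim_row A) - mat_inv_sqrt D * A * mat_inv_sqrt D"

text \<open>Nodes are \<open>0..<n\<close>, clusters are \<open>0..<k\<close>; \<open>c j\<close> is the cluster of node \<open>j\<close>.
  Expected positive / negative adjacency matrices (no self loops): an edge is present
  w.p. \<open>p\<close>; it is positive within clusters and negative across clusters, and its sign
  is flipped w.p. \<open>\<eta>\<close>.\<close>
definition EAp :: "nat \<Rightarrow> real \<Rightarrow> real \<Rightarrow> (nat \<Rightarrow> nat) \<Rightarrow> real mat" where
  "EAp n p eta c = mat n n (\<lambda>(i,j). if i = j then 0
       else if c i = c j then p * (1 - eta) else p * eta)"

definition EAm :: "nat \<Rightarrow> real \<Rightarrow> real \<Rightarrow> (nat \<Rightarrow> nat) \<Rightarrow> real mat" where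
  "EAm n p eta c = mat n n (\<lambda>(i,j). if i = j then 0
       else if c i = c j then p * eta else p * (1 - eta))"

definition Theta :: "nat \<Rightarrow> nat \<Rightarrow> (nat \<Rightarrow> nat) \<Rightarrow> real mat" where
  "Theta n k c = mat n k (\<lambda>(j,i). if c j = i then sqrt (real k / real n) else 0)"

definition Lp_bar :: "nat \<Rightarrow> real \<Rightarrow> real \<Rightarrow> (nat \<Rightarrow> nat) \<Rightarrow> real mat" where
  "Lp_bar n p eta c = sym_laplacian (deg_mat (EAp n p eta c)) (EAp n p eta c)"

definition Lm_bar :: "nat \<Rightarrow> real \<Rightarrow> real \<Rightarrow> (nat \<Rightarrow> nat) \<Rightarrow> real mat" where
  "Lm_bar n p eta c = sym_laplacian (deg_mat (EAm n p eta c)) (EAm n p eta c)"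

definition T_bar :: "nat \<Rightarrow> real \<Rightarrow> real \<Rightarrow> (nat \<Rightarrow> nat) \<Rightarrow> real \<Rightarrow> real \<Rightarrow> real mat" where
  "T_bar n p eta c taup taum =
     (let S = mat_inv_sqrt (Lm_bar n p eta c + taup \<cdot>\<^sub>m 1\<^sub>m n)
      in S * (Lp_bar n p eta c + taum \<cdot>\<^sub>m 1\<^sub>m n) * S)"

text \<open>\<open>V\<close> is an admissible \<open>V_k(T)\<close>: an \<open>n \<times> k\<close> matrix with orthonormal columns, column \<open>j\<close>
  (0-based) being an eigenvector for \<open>\<lambda>_{n-k+1+j}(T)\<close>, i.e. the columns are orthonormal
  eigenvectors for the \<open>k\<close> smallest eigenvalues.\<close>
definition is_Vk :: "nat \<Rightarrow> nat \<Rightarrow> real mat \<Rightarrow> real mat \<Rightarrow> bool" where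
  "is_Vk n k T V \<longleftrightarrow> V \<in> carrier_mat n k \<and> transpose_mat V * V = 1\<^sub>m k
     \<and> (\<forall>j<k. T *\<^sub>v col V j = (eigvals_desc T ! (n - k + j)) \<cdot>\<^sub>v col V j)"

definition dp :: "nat \<Rightarrow> nat \<Rightarrow> real \<Rightarrow> real \<Rightarrow> real" where
  "dp n k p eta = p * (real n / real k * (1 - 2*eta) + real n * eta - (1 - eta))"

definition dm :: "nat \<Rightarrow> nat \<Rightarrow> real \<Rightarrow> real \<Rightarrow> real" where
  "dm n k p eta = p * (real n * (1 - eta) - real n / real k * (1 - 2*eta) - eta)"

definition alphap :: "nat \<Rightarrow> nat \<Rightarrow> real \<Rightarrow> real \<Rightarrow> real \<Rightarrow> real" where
  "alphap n k p eta taum = 1 + taum + p * (1 - eta) / dp n k p eta"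

definition alpham :: "nat \<Rightarrow> nat \<Rightarrow> real \<Rightarrow> real \<Rightarrow> real \<Rightarrow> real" where
  "alpham n k p eta taup = 1 + taup + p * eta / dm n k p eta"

definition chi1_outer :: "nat \<Rightarrow> real mat" where
  "chi1_outer k = (let chi = vec k (\<lambda>_. 1 / sqrt (real k)) in
      mat k k (\<lambda>(i,j). chi $ i * chi $ j))"

definition Cep :: "nat \<Rightarrow> nat \<Rightarrow> real \<Rightarrow> real \<Rightarrow> real \<Rightarrow> real mat" where
  "Cep n k p eta taum =
     (- p * eta * real n / dp n k p eta) \<cdot>\<^sub>m chi1_outer k
     + (1 + taum + p / dp n k p eta * (1 - eta - real n / real k * (1 - 2*eta))) \<cdot>\<^sub>m 1\<^sub>m k"

definition Cem :: "nat \<Rightarrow> nat \<Rightarrow> real \<Rightarrow> real \<Rightarrow> real \<Rightarrow> real mat" where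
  "Cem n k p eta taup =
     (- p * (1 - eta) * real n / dm n k p eta) \<cdot>\<^sub>m chi1_outer k
     + (1 + taup + p / dm n k p eta * (eta + real n / real k * (1 - 2*eta))) \<cdot>\<^sub>m 1\<^sub>m k"

definition Ce_mat :: "nat \<Rightarrow> nat \<Rightarrow> real \<Rightarrow> real \<Rightarrow> real \<Rightarrow> real \<Rightarrow> real mat" where
  "Ce_mat n k p eta taup taum =
     mat_inv_sqrt (Cem n k p eta taup) * Cep n k p eta taum * mat_inv_sqrt (Cem n k p eta taup)"

end

theory Submission
  imports Defs
begin

lemma sylvester: fixes U W :: "real mat"
  assumes U: "U \<in> carrier_mat n k" and W: "W \<in> carrier_mat k n"
  shows "det (1\<^sub>m n + U * W) = det (1\<^sub>m k + W * U)"
proof -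
  define M where "M = four_block_mat (1\<^sub>m n) (- U) W (1\<^sub>m k)"
  define P1 where "P1 = four_block_mat (1\<^sub>m n) U (0\<^sub>m k n) (1\<^sub>m k)"
  define P2 where "P2 = four_block_mat (1\<^sub>m n) (0\<^sub>m n k) (- W) (1\<^sub>m k)"
  have Mc: "M \<in> carrier_mat (n+k) (n+k)" unfolding M_def by auto
  have P1c: "P1 \<in> carrier_mat (n+k) (n+k)" unfolding P1_def by auto
  have P2c: "P2 \<in> carrier_mat (n+k) (n+k)" unfolding P2_def by auto
  have UW: "U * W \<in> carrier_mat n n" and WU: "W * U \<in> carrier_mat k k" using U W by auto
  have "M * P1 = four_block_mat (1\<^sub>m n * 1\<^sub>m n + (- U) * 0\<^sub>m k n) (1\<^sub>m n * U + (- U) * 1\<^sub>m k)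
      (W * 1\<^sub>m n + 1\<^sub>m k * 0\<^sub>m k n) (W * U + 1\<^sub>m k * 1\<^sub>m k)"
    unfolding M_def P1_def by (rule mult_four_block_mat) (use U W in auto)
  also have "\<dots> = four_block_mat (1\<^sub>m n) (0\<^sub>m n k) W (1\<^sub>m k + W * U)"
    using U W WU by (intro arg_cong4[where f = four_block_mat]) (auto simp: comm_add_mat[of _ k k])
  finally have MP1: "M * P1 = four_block_mat (1\<^sub>m n) (0\<^sub>m n k) W (1\<^sub>m k + W * U)" .
  have "M * P2 = four_block_mat (1\<^sub>m n * 1\<^sub>m n + (- U) * (- W)) (1\<^sub>m n * 0\<^sub>m n k + (- U) * 1\<^sub>m k)
      (W * 1\<^sub>m n + 1\<^sub>m k * (- W)) (W * 0\<^sub>m n k + 1\<^sub>m k * 1\<^sub>m k)"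
    unfolding M_def P2_def by (rule mult_four_block_mat) (use U W in auto)
  also have "\<dots> = four_block_mat (1\<^sub>m n + U * W) (- U) (0\<^sub>m k n) (1\<^sub>m k)"
    using U W UW by (intro arg_cong4[where f = four_block_mat]) auto
  finally have MP2: "M * P2 = four_block_mat (1\<^sub>m n + U * W) (- U) (0\<^sub>m k n) (1\<^sub>m k)" .
  have d1: "det P1 = 1" unfolding P1_def
    by (subst det_four_block_mat_lower_left_zero[of _ n _ k]) (use U in auto)
  have d2: "det P2 = 1" unfolding P2_def
    by (subst det_four_block_mat_upper_right_zero[of _ n _ k]) (use W in auto)
  have "det M = det (1\<^sub>m k + W * U)"
    using det_mult[OF Mc P1c] d1 unfolding MP1
    by (subst (asm) det_four_block_mat_upper_right_zero[of _ n _ k]) (use W WU in auto)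
  moreover have "det M = det (1\<^sub>m n + U * W)"
    using det_mult[OF Mc P2c] d2 unfolding MP2
    by (subst (asm) det_four_block_mat_lower_left_zero[of _ n _ k]) (use U UW in auto)
  ultimately show ?thesis by simp
qed


lemma det_sJ: assumes y: "(y::real) \<noteq> 0" and k: "0 < k"
  shows "det (mat k k (\<lambda>(i,j). s + (if i = j then y else 0))) = y^(k-1) * (y + real k * s)"
proof -
  define U where "U = mat k 1 (\<lambda>_. 1::real)"
  define W where "W = mat 1 k (\<lambda>_. s / y)"
  have U: "U \<in> carrier_mat k 1" and W: "W \<in> carrier_mat 1 k" unfolding U_def W_def by auto
  have eq: "mat k k (\<lambda>(i,j). s + (if i = j then y else 0)) = y \<cdot>\<^sub>m (1\<^sub>m k + U * W)"
    by (rule eq_matI) (use y in \<open>auto simp: U_def W_def scalar_prod_def field_simps\<close>)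
  have "det (1\<^sub>m 1 + W * U) = 1 + real k * s / y"
    by (subst det_single) (use U W in \<open>auto simp: U_def W_def scalar_prod_def\<close>)
  hence "det (mat k k (\<lambda>(i,j). s + (if i = j then y else 0))) = y ^ k * (1 + real k * s / y)"
    unfolding eq using sylvester[OF U W] W by simp
  also have "\<dots> = y^(k-1) * (y + real k * s)"
  proof -
    have "y ^ k = y^(k-1) * y" using k by (metis Suc_diff_1 power_Suc2)
    thus ?thesis using y by (simp add: field_simps)
  qed
  finally show ?thesis .
qed


locale clus =
  fixes n k :: nat and c :: "nat \<Rightarrow> nat"
  assumes kpos: "0 < k" and npos: "0 < n" and kdvd: "k dvd n"
    and c_lt: "\<And>j. j < n \<Longrightarrow> c j < k"
    and card_c: "\<And>i. i < k \<Longrightarrow> card {j. j < n \<and> c j = i} = n div k"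
begin

definition m :: nat where "m = n div k"

lemma m_pos: "0 < m"
  using kpos npos kdvd unfolding m_def by (metis dvd_div_eq_0_iff gr0I not_gr0)

lemma n_eq: "real n = real k * real m"
  using kdvd unfolding m_def by (metis dvd_mult_div_cancel of_nat_mult)

lemma sum_same: assumes "j < n"
  shows "(\<Sum>l<n. if c l = c j then (x::real) else 0) = real m * x"
proof -
  have e: "{..<n} \<inter> {l. c l = c j} = {l. l < n \<and> c l = c j}" by auto
  show ?thesis using card_c[OF c_lt[OF assms]] unfolding m_def by (simp add: sum.If_cases e)
qed

definition Gm :: "real \<Rightarrow> real \<Rightarrow> real \<Rightarrow> real mat" where
  "Gm a b g = mat n n (\<lambda>(i,j). a + (if c i = c j then b else 0) + (if i = j then g else 0))"

lemma Gm_carrier[simp]: "Gm a b g \<in> carrier_mat n n" and Gm_dims[simp]: "dim_row (Gm a b g) = n" "dim_col (Gm a b g) = n"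
  unfolding Gm_def by auto

lemma Gm_index[simp]: "i < n \<Longrightarrow> j < n \<Longrightarrow> Gm a b g $$ (i,j) = a + (if c i = c j then b else 0) + (if i = j then g else 0)"
  unfolding Gm_def by simp

lemma Gm_mult: "Gm a b g * Gm a' b' g' =
   Gm (real n * a * a' + real m * (a * b' + b * a') + a * g' + g * a')
      (real m * b * b' + b * g' + g * b') (g * g')"
proof (rule eq_matI)
  fix i j assume i: "i < dim_row (Gm (real n * a * a' + real m * (a * b' + b * a') + a * g' + g * a')
      (real m * b * b' + b * g' + g * b') (g * g'))" and j: "j < dim_col (Gm (real n * a * a' + real m * (a * b' + b * a') + a * g' + g * a')
      (real m * b * b' + b * g' + g * b') (g * g'))"
  hence i: "i < n" and j: "j < n" by auto
  have "(Gm a b g * Gm a' b' g') $$ (i,j) = (\<Sum>l<n. Gm a b g $$ (i,l) * Gm a' b' g' $$ (l,j))"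
    using i j by (simp add: scalar_prod_def row_def col_def lessThan_atLeast0)
  also have "\<dots> = (\<Sum>l<n. a*a' + (if c l = c j then a*b' else 0) + (if l = j then a*g' else 0)
     + (if c l = c i then b*a' else 0) + (if c l = c i then (if c i = c j then b*b' else 0) else 0)
     + (if l = j then (if c i = c j then b*g' else 0) else 0)
     + (if l = i then g*a' else 0) + (if l = i then (if c i = c j then g*b' else 0) else 0)
     + (if l = i then (if i = j then g*g' else 0) else 0))"
    using i j by (intro sum.cong refl) (auto simp: algebra_simps)
  also have "\<dots> = real n * a * a' + real m * (a*b') + a*g' + real m * (b*a')
     + real m * (if c i = c j then b*b' else 0) + (if c i = c j then b*g' else 0)
     + g*a' + (if c i = c j then g*b' else 0) + (if i = j then g*g' else 0)"
    using i j by (simp add: sum.distrib sum_same)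
  also have "\<dots> = Gm (real n * a * a' + real m * (a * b' + b * a') + a * g' + g * a')
      (real m * b * b' + b * g' + g * b') (g * g') $$ (i,j)"
    using i j by (auto simp: algebra_simps)
  finally show "(Gm a b g * Gm a' b' g') $$ (i,j) = Gm (real n * a * a' + real m * (a * b' + b * a') + a * g' + g * a')
      (real m * b * b' + b * g' + g * b') (g * g') $$ (i,j)" .
qed auto


definition Gev :: "real \<Rightarrow> real \<Rightarrow> real \<Rightarrow> real mat" where
  "Gev e1 e2 e3 = Gm ((e1 - e2) / real n) ((e2 - e3) / real m) e3"

lemma Gev_carrier[simp]: "Gev a b g \<in> carrier_mat n n" and Gev_dims[simp]: "dim_row (Gev a b g) = n" "dim_col (Gev a b g) = n"
  unfolding Gev_def by auto

lemma Gm_Gev: "Gm a b g = Gev (g + real m * b + real n * a) (g + real m * b) g"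
  unfolding Gev_def using m_pos npos by simp

lemma Gev_mult: "Gev e1 e2 e3 * Gev f1 f2 f3 = Gev (e1 * f1) (e2 * f2) (e3 * f3)"
proof -
  have n0: "real n \<noteq> 0" and m0: "real m \<noteq> 0" using npos m_pos by auto
  have A: "real n * ((e1 - e2) / real n) * ((f1 - f2) / real n) +
    real m * ((e1 - e2) / real n * ((f2 - f3) / real m) + (e2 - e3) / real m * ((f1 - f2) / real n)) +
    (e1 - e2) / real n * f3 + e3 * ((f1 - f2) / real n) = (e1 * f1 - e2 * f2) / real n"
  proof -
    have "real n * ((e1 - e2) / real n) * ((f1 - f2) / real n) = (e1 - e2) * (f1 - f2) / real n"
      using n0 by simp
    moreover have "real m * ((e1 - e2) / real n * ((f2 - f3) / real m) + (e2 - e3) / real m * ((f1 - f2) / real n))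
      = ((e1 - e2) * (f2 - f3) + (e2 - e3) * (f1 - f2)) / real n"
    proof -
      have "\<And>x y. real m * (x / real n * (y / real m)) = x * y / real n"
           "\<And>x y. real m * (x / real m * (y / real n)) = x * y / real n" using m0 by auto
      thus ?thesis by (simp add: distrib_left add_divide_distrib)
    qed
    moreover have "(e1 - e2) / real n * f3 + e3 * ((f1 - f2) / real n) = ((e1 - e2) * f3 + e3 * (f1 - f2)) / real n"
      by (simp add: add_divide_distrib[symmetric] algebra_simps)
    ultimately show ?thesis by (simp add: add_divide_distrib[symmetric] algebra_simps)
  qed
  have B: "real m * ((e2 - e3) / real m) * ((f2 - f3) / real m) + (e2 - e3) / real m * f3 + e3 * ((f2 - f3) / real m)
     = (e2 * f2 - e3 * f3) / real m"
  proof -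
    have "real m * ((e2 - e3) / real m) * ((f2 - f3) / real m) = (e2 - e3) * (f2 - f3) / real m"
      using m0 by simp
    thus ?thesis by (simp add: add_divide_distrib[symmetric] algebra_simps)
  qed
  show ?thesis unfolding Gev_def Gm_mult A B ..
qed


lemma Gev_index[simp]: "i < n \<Longrightarrow> j < n \<Longrightarrow> Gev e1 e2 e3 $$ (i,j) =
   (e1 - e2) / real n + (if c i = c j then (e2 - e3) / real m else 0) + (if i = j then e3 else 0)"
  unfolding Gev_def by simp

lemma Gev_add: "Gev a b g + Gev a' b' g' = Gev (a + a') (b + b') (g + g')"
  by (rule eq_matI) (auto simp: add_divide_distrib[symmetric] diff_divide_distrib[symmetric] algebra_simps)

lemma Gev_minus: "Gev a b g - Gev a' b' g' = Gev (a - a') (b - b') (g - g')"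
  by (rule eq_matI) (auto simp: add_divide_distrib[symmetric] diff_divide_distrib[symmetric] algebra_simps)

lemma Gev_smult: "r \<cdot>\<^sub>m Gev a b g = Gev (r * a) (r * b) (r * g)"
  by (rule eq_matI) (auto simp: algebra_simps)

lemma Gev_one: "1\<^sub>m n = Gev 1 1 1"
  by (rule eq_matI) auto

lemma Gev_transpose: "transpose_mat (Gev a b g) = Gev a b g"
  by (rule eq_matI) auto

lemma Gev_decomp: "i < n \<Longrightarrow> j < n \<Longrightarrow> Gev e1 e2 e3 $$ (i,j) =
   e1 * Gev 1 0 0 $$ (i,j) + e2 * Gev 0 1 0 $$ (i,j) + e3 * Gev 0 0 1 $$ (i,j)"
  using npos m_pos by (auto simp: field_simps)

end

lemma qf_expand: assumes A: "A \<in> carrier_mat n n" and v: "v \<in> carrier_vec n"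
  shows "v \<bullet> (A *\<^sub>v v) = (\<Sum>i<n. \<Sum>j<n. v $ i * A $$ (i,j) * v $ j)"
  using A v by (simp add: scalar_prod_def row_def lessThan_atLeast0 sum_distrib_left algebra_simps)

lemma qf_idem: assumes A: "(A :: real mat) \<in> carrier_mat n n" and sym: "transpose_mat A = A" and idem: "A * A = A"
  and v: "v \<in> carrier_vec n"
  shows "v \<bullet> (A *\<^sub>v v) = (A *\<^sub>v v) \<bullet> (A *\<^sub>v v)"
proof -
  have "A *\<^sub>v v = A *\<^sub>v (A *\<^sub>v v)" using assoc_mult_mat_vec[OF A A v] idem by simp
  hence "v \<bullet> (A *\<^sub>v v) = v \<bullet> (A *\<^sub>v (A *\<^sub>v v))" by simp
  also have "\<dots> = (transpose_mat A *\<^sub>v v) \<bullet> (A *\<^sub>v v)"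
    by (rule transpose_vec_mult_scalar[of A n n "A *\<^sub>v v" v, symmetric]) (use A v in auto)
  finally show ?thesis using sym by simp
qed

lemma self_scalar_nonneg: "(w :: real vec) \<bullet> w \<ge> 0"
  by (simp add: scalar_prod_def sum_nonneg)

lemma self_scalar_zero: assumes w: "(w :: real vec) \<in> carrier_vec n" and z: "w \<bullet> w = 0"
  shows "w = 0\<^sub>v n"
proof (rule eq_vecI)
  fix i assume i: "i < dim_vec (0\<^sub>v n :: real vec)"
  have "(\<Sum>i\<in>{0..<n}. w $ i * w $ i) = 0" using z w by (simp add: scalar_prod_def)
  hence "\<forall>i\<in>{0..<n}. w $ i * w $ i = 0" by (subst sum_nonneg_eq_0_iff[symmetric]) auto
  thus "w $ i = 0\<^sub>v n $ i" using i by auto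
qed (use w in auto)


lemma posdef_nonneg: assumes S: "S \<in> carrier_mat n n" and pd: "posdef S" and v: "v \<in> carrier_vec n"
  shows "v \<bullet> (S *\<^sub>v v) \<ge> 0"
proof (cases "v = 0\<^sub>v n")
  case True thus ?thesis using S by simp
next
  case False thus ?thesis using pd S v unfolding posdef_def by (auto intro: less_imp_le)
qed

lemma posdef_zero: assumes S: "S \<in> carrier_mat n n" and pd: "posdef S" and v: "v \<in> carrier_vec n"
  and z: "v \<bullet> (S *\<^sub>v v) = 0" shows "v = 0\<^sub>v n"
  using pd S v z unfolding posdef_def by force

definition fro :: "nat \<Rightarrow> real mat \<Rightarrow> real mat \<Rightarrow> real" where
  "fro n X Y = (\<Sum>i<n. \<Sum>j<n. X $$ (i,j) * Y $$ (i,j))"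

lemma fro_col: assumes D: "D \<in> carrier_mat n n" and S: "S \<in> carrier_mat n n"
  shows "fro n D (S * D) = (\<Sum>j<n. col D j \<bullet> (S *\<^sub>v col D j))"
proof -
  have "fro n D (S * D) = (\<Sum>j<n. \<Sum>i<n. D $$ (i,j) * (S * D) $$ (i,j))"
    unfolding fro_def by (rule sum.swap)
  also have "\<dots> = (\<Sum>j<n. col D j \<bullet> (S *\<^sub>v col D j))"
    using D S by (intro sum.cong refl) (simp add: scalar_prod_def lessThan_atLeast0)
  finally show ?thesis .
qed

lemma fro_row: assumes D: "D \<in> carrier_mat n n" and S: "S \<in> carrier_mat n n" and sym: "transpose_mat S = S"
  shows "fro n D (D * S) = (\<Sum>i<n. row D i \<bullet> (S *\<^sub>v row D i))"
  unfolding fro_def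
proof (intro sum.cong refl)
  fix i assume "i \<in> {..<n}" hence i: "i < n" by auto
  have "S $$ (j, l) = S $$ (l, j)" if "j < n" "l < n" for j l
    using sym that S by (metis carrier_matD(1) carrier_matD(2) index_transpose_mat(1))
  thus "(\<Sum>j<n. D $$ (i, j) * (D * S) $$ (i, j)) = row D i \<bullet> (S *\<^sub>v row D i)"
    using D S i by (simp add: scalar_prod_def lessThan_atLeast0 sum_distrib_left mult.commute mult.left_commute)
qed

lemma sqrt_unique: assumes S: "S \<in> carrier_mat n n" and T: "T \<in> carrier_mat n n"
  and sS: "transpose_mat S = S" and sT: "transpose_mat T = T"
  and pS: "posdef S" and pT: "posdef T" and eq: "S * S = T * T"
  shows "S = T"
proof -
  define D where "D = S - T"
  have Dc: "D \<in> carrier_mat n n" using S T D_def by auto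
  have sD: "transpose_mat D = D" unfolding D_def using sS sT S T by (metis transpose_minus)
  have "S * D + D * T = S * S - S * T + (S * T - T * T)"
    unfolding D_def using S T by (simp add: mult_minus_distrib_mat[of _ n n] minus_mult_distrib_mat[of _ n n])
  also have "\<dots> = 0\<^sub>m n n" using S T eq by (intro eq_matI) auto
  finally have z: "S * D + D * T = 0\<^sub>m n n" .
  have "fro n D (S * D) + fro n D (D * T) = fro n D (S * D + D * T)"
    unfolding fro_def using S T Dc by (simp add: sum.distrib[symmetric] algebra_simps)
  also have "\<dots> = 0" unfolding z fro_def by simp
  finally have sum0: "fro n D (S * D) + fro n D (D * T) = 0" .
  have rowc: "row D i \<in> carrier_vec n" "col D i \<in> carrier_vec n" for i using Dc by auto
  have a: "fro n D (S * D) \<ge> 0" unfolding fro_col[OF Dc S]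
    by (intro sum_nonneg posdef_nonneg[OF S pS] rowc)
  have b: "fro n D (D * T) \<ge> 0" unfolding fro_row[OF Dc T sT]
    by (intro sum_nonneg posdef_nonneg[OF T pT] rowc)
  have "fro n D (S * D) = 0" using a b sum0 by linarith
  hence "(\<Sum>j<n. col D j \<bullet> (S *\<^sub>v col D j)) = 0" unfolding fro_col[OF Dc S] .
  hence "\<forall>j\<in>{..<n}. col D j \<bullet> (S *\<^sub>v col D j) = 0"
    by (subst sum_nonneg_eq_0_iff[symmetric]) (auto intro: posdef_nonneg[OF S pS] rowc)
  hence cz: "col D j = 0\<^sub>v n" if "j < n" for j
    using posdef_zero[OF S pS rowc(2)] that by auto
  show "S = T"
  proof (rule eq_matI)
    fix i j assume "i < dim_row T" "j < dim_col T"
    hence i: "i < n" and j: "j < n" using T by auto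
    have "D $$ (i,j) = 0" using cz[OF j] i j Dc
      by (metis carrier_matD(1) carrier_matD(2) index_col index_zero_vec(1))
    thus "S $$ (i,j) = T $$ (i,j)" using i j S T unfolding D_def by simp
  qed (use S T in auto)
qed

lemma mat_inv_sqrt_eqI: assumes A: "A \<in> carrier_mat n n" and S: "S \<in> carrier_mat n n"
  and sS: "transpose_mat S = S" and pS: "posdef S" and inv: "S * S * A = 1\<^sub>m n"
  shows "mat_inv_sqrt A = S"
  unfolding mat_inv_sqrt_def
proof (rule the_equality)
  show "S \<in> carrier_mat (dim_row A) (dim_row A) \<and> transpose_mat S = S \<and> posdef S \<and> S * S * A = 1\<^sub>m (dim_row A)"
    using A S sS pS inv by auto
  fix R assume R: "R \<in> carrier_mat (dim_row A) (dim_row A) \<and> transpose_mat R = R \<and> posdef R \<and> R * R * A = 1\<^sub>m (dim_row A)"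
  hence Rc: "R \<in> carrier_mat n n" and sR: "transpose_mat R = R" and pR: "posdef R" and iR: "R * R * A = 1\<^sub>m n"
    using A by auto
  have SS: "S * S \<in> carrier_mat n n" using S by auto
  have RR: "R * R \<in> carrier_mat n n" using Rc by auto
  have AS: "A * (S * S) = 1\<^sub>m n" by (rule mat_mult_left_right_inverse[OF SS A inv])
  have "R * R = R * R * (A * (S * S))" using RR AS by (metis right_mult_one_mat)
  also have "\<dots> = (R * R * A) * (S * S)" using RR A SS by (simp add: assoc_mult_mat[of _ n n _ n _ n])
  also have "\<dots> = S * S" using iR SS by (metis left_mult_one_mat)
  finally show "R = S" using sqrt_unique[OF Rc S sR sS pR pS] by simp
qed


lemma prod_lin_mset:
  "prod_list (map (\<lambda>a. [:- a, 1:]) xs) = prod_list (map (\<lambda>a. [:- a, 1:]) ys) \<Longrightarrow> mset xs = mset (ys :: real list)"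
proof (induction xs arbitrary: ys)
  case Nil
  show ?case
  proof (cases ys)
    case (Cons y ys')
    have "poly (prod_list (map (\<lambda>a. [:- a, 1:]) ys)) y = 0"
      unfolding poly_prod_list_zero_iff using Cons by auto
    thus ?thesis using Nil.prems by simp
  qed simp
next
  case (Cons a xs)
  have "poly (prod_list (map (\<lambda>a. [:- a, 1:]) ys)) a = 0"
    unfolding Cons.prems[symmetric] by simp
  then obtain y where y: "y \<in> set ys" "a = y"
    unfolding poly_prod_list_zero_iff by auto
  have "[:- a, 1:] * prod_list (map (\<lambda>a. [:- a, 1:]) xs) = [:- a, 1:] * prod_list (map (\<lambda>a. [:- a, 1:]) (remove1 a ys))"
    using Cons.prems prod_list_map_remove1[OF y(1), of "\<lambda>a. [:- a, 1:]"] y(2) by simp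
  hence "prod_list (map (\<lambda>a. [:- a, 1:]) xs) = prod_list (map (\<lambda>a. [:- a, 1:]) (remove1 a ys))"
    by (subst (asm) mult_left_cancel) auto
  from Cons.IH[OF this] show ?case using y by simp
qed

lemma sorted_desc_unique: fixes xs ys :: "real list"
  assumes "sorted_wrt (\<ge>) xs" "sorted_wrt (\<ge>) ys" "mset xs = mset ys"
  shows "xs = ys"
proof -
  have s: "sorted (rev xs)" "sorted (rev ys)" using assms(1,2) by (simp_all add: sorted_wrt_rev)
  have "sort (rev ys) = rev xs" by (rule properties_for_sort) (use assms(3) s in auto)
  moreover have "sort (rev ys) = rev ys" by (rule properties_for_sort) (use s in auto)
  ultimately show ?thesis by simp
qed

lemma eigvals_desc_eqI: fixes A :: "real mat"
  assumes "length ls = dim_row A" "sorted_wrt (\<ge>) ls" "char_poly A = prod_list (map (\<lambda>a. [:- a, 1:]) ls)"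
  shows "eigvals_desc A = ls"
  unfolding eigvals_desc_def
proof (rule the_equality)
  show "length ls = dim_row A \<and> sorted_wrt (\<ge>) ls \<and> char_poly A = prod_list (map (\<lambda>a. [:- a, 1:]) ls)"
    using assms by auto
  fix xs assume "length xs = dim_row A \<and> sorted_wrt (\<ge>) xs \<and> char_poly A = prod_list (map (\<lambda>a. [:- a, 1:]) xs)"
  thus "xs = ls" using assms prod_lin_mset sorted_desc_unique by metis
qed

context clus begin

lemma qf_lin: assumes v: "v \<in> carrier_vec n"
  shows "v \<bullet> (Gev e1 e2 e3 *\<^sub>v v) = e1 * (v \<bullet> (Gev 1 0 0 *\<^sub>v v)) + e2 * (v \<bullet> (Gev 0 1 0 *\<^sub>v v))
     + e3 * (v \<bullet> (Gev 0 0 1 *\<^sub>v v))"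
proof -
  have "(\<Sum>i<n. \<Sum>j<n. v $ i * Gev e1 e2 e3 $$ (i,j) * v $ j) =
     (\<Sum>i<n. \<Sum>j<n. e1 * (v $ i * Gev 1 0 0 $$ (i,j) * v $ j) + e2 * (v $ i * Gev 0 1 0 $$ (i,j) * v $ j)
        + e3 * (v $ i * Gev 0 0 1 $$ (i,j) * v $ j))"
  proof (intro sum.cong refl)
    fix i j assume "i \<in> {..<n}" "j \<in> {..<n}"
    hence i: "i < n" and j: "j < n" by auto
    show "v $ i * Gev e1 e2 e3 $$ (i, j) * v $ j = e1 * (v $ i * Gev 1 0 0 $$ (i,j) * v $ j) + e2 * (v $ i * Gev 0 1 0 $$ (i,j) * v $ j)
        + e3 * (v $ i * Gev 0 0 1 $$ (i,j) * v $ j)"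
      unfolding Gev_decomp[OF i j, of e1 e2 e3] by (simp add: algebra_simps del: Gev_index)
  qed
  also have "\<dots> = e1 * (\<Sum>i<n. \<Sum>j<n. v $ i * Gev 1 0 0 $$ (i,j) * v $ j)
     + e2 * (\<Sum>i<n. \<Sum>j<n. v $ i * Gev 0 1 0 $$ (i,j) * v $ j)
     + e3 * (\<Sum>i<n. \<Sum>j<n. v $ i * Gev 0 0 1 $$ (i,j) * v $ j)"
    by (simp only: sum.distrib sum_distrib_left)
  finally show ?thesis using v by (simp add: qf_expand[of _ n])
qed


definition Q :: "real \<Rightarrow> real \<Rightarrow> real \<Rightarrow> real vec \<Rightarrow> real" where
  "Q e f g v = (Gev e f g *\<^sub>v v) \<bullet> (Gev e f g *\<^sub>v v)"

lemma qf_Q: assumes v: "v \<in> carrier_vec n"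
  shows "v \<bullet> (Gev e1 e2 e3 *\<^sub>v v) = e1 * Q 1 0 0 v + e2 * Q 0 1 0 v + e3 * Q 0 0 1 v"
proof -
  have *: "v \<bullet> (Gev e f g *\<^sub>v v) = Q e f g v" if "e * e = e" "f * f = f" "g * g = g" for e f g
  proof -
    have "Gev e f g * Gev e f g = Gev e f g" by (simp only: Gev_mult that)
    thus ?thesis unfolding Q_def by (intro qf_idem[OF Gev_carrier Gev_transpose _ v])
  qed
  have "v \<bullet> (Gev 1 0 0 *\<^sub>v v) = Q 1 0 0 v" by (rule *) auto
  moreover have "v \<bullet> (Gev 0 1 0 *\<^sub>v v) = Q 0 1 0 v" by (rule *) auto
  moreover have "v \<bullet> (Gev 0 0 1 *\<^sub>v v) = Q 0 0 1 v" by (rule *) auto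
  ultimately show ?thesis using qf_lin[OF v, of e1 e2 e3] by simp
qed

lemma Q_nonneg: "Q e f g v \<ge> 0" unfolding Q_def by (rule self_scalar_nonneg)

lemma Q_sum: assumes v: "v \<in> carrier_vec n"
  shows "v \<bullet> v = Q 1 0 0 v + Q 0 1 0 v + Q 0 0 1 v"
  using qf_Q[OF v, of 1 1 1] v unfolding Gev_one[symmetric] by simp


lemma posdef_Gev: assumes "e1 > 0" "e2 > 0" "e3 > 0" shows "posdef (Gev e1 e2 e3)"
  unfolding posdef_def
proof (intro ballI impI)
  fix v :: "real vec" assume v: "v \<in> carrier_vec (dim_row (Gev e1 e2 e3))" and nz: "v \<noteq> 0\<^sub>v (dim_row (Gev e1 e2 e3))"
  hence v: "v \<in> carrier_vec n" and nz: "v \<noteq> 0\<^sub>v n" by auto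
  have pos: "v \<bullet> v > 0" using self_scalar_nonneg[of v] self_scalar_zero[OF v] nz by force
  define em where "em = min e1 (min e2 e3)"
  have em: "em > 0" "em \<le> e1" "em \<le> e2" "em \<le> e3" using assms unfolding em_def by auto
  have "em * (v \<bullet> v) \<le> e1 * Q 1 0 0 v + e2 * Q 0 1 0 v + e3 * Q 0 0 1 v"
    unfolding Q_sum[OF v] distrib_left
    by (intro add_mono mult_right_mono em Q_nonneg)
  moreover have "em * (v \<bullet> v) > 0" using em pos by simp
  ultimately show "0 < v \<bullet> (Gev e1 e2 e3 *\<^sub>v v)" unfolding qf_Q[OF v] by linarith
qed

lemma mat_inv_sqrt_Gev: assumes "e1 > 0" "e2 > 0" "e3 > 0"
  shows "mat_inv_sqrt (Gev e1 e2 e3) = Gev (1 / sqrt e1) (1 / sqrt e2) (1 / sqrt e3)"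
proof (rule mat_inv_sqrt_eqI[OF Gev_carrier Gev_carrier Gev_transpose])
  show "posdef (Gev (1 / sqrt e1) (1 / sqrt e2) (1 / sqrt e3))" by (rule posdef_Gev) (use assms in auto)
  show "Gev (1 / sqrt e1) (1 / sqrt e2) (1 / sqrt e3) * Gev (1 / sqrt e1) (1 / sqrt e2) (1 / sqrt e3) * Gev e1 e2 e3 = 1\<^sub>m n"
    unfolding Gev_mult Gev_one using assms by (simp add: power_divide)
qed

lemma Gev_norm_bound: assumes v: "v \<in> carrier_vec n" and b: "\<bar>e1\<bar> \<le> M" "\<bar>e2\<bar> \<le> M" "\<bar>e3\<bar> \<le> M"
  shows "(Gev e1 e2 e3 *\<^sub>v v) \<bullet> (Gev e1 e2 e3 *\<^sub>v v) \<le> M^2 * (v \<bullet> v)"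
proof -
  have "(Gev e1 e2 e3 *\<^sub>v v) \<bullet> (Gev e1 e2 e3 *\<^sub>v v) = (transpose_mat (Gev e1 e2 e3) *\<^sub>v v) \<bullet> (Gev e1 e2 e3 *\<^sub>v v)"
    by (simp add: Gev_transpose)
  also have "\<dots> = v \<bullet> (Gev e1 e2 e3 *\<^sub>v (Gev e1 e2 e3 *\<^sub>v v))"
    by (rule transpose_vec_mult_scalar[OF Gev_carrier mult_mat_vec_carrier[OF Gev_carrier v] v])
  also have "\<dots> = v \<bullet> (Gev (e1*e1) (e2*e2) (e3*e3) *\<^sub>v v)"
    unfolding assoc_mult_mat_vec[OF Gev_carrier Gev_carrier v, symmetric] Gev_mult ..
  also have "\<dots> = (e1*e1) * Q 1 0 0 v + (e2*e2) * Q 0 1 0 v + (e3*e3) * Q 0 0 1 v" by (rule qf_Q[OF v])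
  also have "\<dots> \<le> M^2 * Q 1 0 0 v + M^2 * Q 0 1 0 v + M^2 * Q 0 0 1 v"
  proof -
    have "x * x \<le> M^2" if "\<bar>x\<bar> \<le> M" for x :: real
    proof -
      have "x * x = \<bar>x\<bar> * \<bar>x\<bar>" by simp
      also have "\<dots> \<le> M * M" by (rule mult_mono) (use that in auto)
      finally show ?thesis by (simp add: power2_eq_square)
    qed
    thus ?thesis using b by (intro add_mono mult_right_mono Q_nonneg) auto
  qed
  also have "\<dots> = M^2 * (v \<bullet> v)" unfolding Q_sum[OF v] by (simp add: algebra_simps)
  finally show ?thesis .
qed


lemma sum_cl: assumes "i < k"
  shows "(\<Sum>l<n. if c l = i then (x::real) else 0) = real m * x"
proof -
  have e: "{..<n} \<inter> {l. c l = i} = {l. l < n \<and> c l = i}" by auto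
  show ?thesis using card_c[OF assms] unfolding m_def by (simp add: sum.If_cases e)
qed

lemma det_Gm: assumes g: "g \<noteq> 0" and gb: "g + real m * b \<noteq> 0"
  shows "det (Gm a b g) = g^(n-k) * (g + real m * b)^(k-1) * (g + real m * b + real n * a)"
proof -
  define U where "U = mat n k (\<lambda>(i,j). if c i = j then 1 else (0::real))"
  define W where "W = mat k n (\<lambda>(l,j). (a + (if l = c j then b else 0)) / g)"
  have U: "U \<in> carrier_mat n k" and W: "W \<in> carrier_mat k n" unfolding U_def W_def by auto
  have eq1: "Gm a b g = g \<cdot>\<^sub>m (1\<^sub>m n + U * W)"
  proof (rule eq_matI)
    fix i j assume "i < dim_row (g \<cdot>\<^sub>m (1\<^sub>m n + U * W))" "j < dim_col (g \<cdot>\<^sub>m (1\<^sub>m n + U * W))"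
    hence i: "i < n" and j: "j < n" using U W by auto
    have "(U * W) $$ (i,j) = (\<Sum>l\<in>{0..<k}. (if c i = l then 1 else 0) * ((a + (if l = c j then b else 0)) / g))"
      using i j U W by (simp add: scalar_prod_def U_def W_def)
    also have "\<dots> = (\<Sum>l\<in>{0..<k}. if c i = l then (a + (if c i = c j then b else 0)) / g else 0)"
      by (intro sum.cong) auto
    also have "\<dots> = (a + (if c i = c j then b else 0)) / g"
      using c_lt[OF i] by simp
    finally show "Gm a b g $$ (i,j) = (g \<cdot>\<^sub>m (1\<^sub>m n + U * W)) $$ (i,j)"
      using i j g U W by (simp add: field_simps)
  qed (use U W in auto)
  have eq2: "1\<^sub>m k + W * U = mat k k (\<lambda>(l,l'). real m * a / g + (if l = l' then 1 + real m * b / g else 0))"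
  proof (rule eq_matI)
    fix l l' assume "l < dim_row (mat k k (\<lambda>(l,l'). real m * a / g + (if l = l' then 1 + real m * b / g else 0)))"
      "l' < dim_col (mat k k (\<lambda>(l,l'). real m * a / g + (if l = l' then 1 + real m * b / g else 0)))"
    hence l: "l < k" and l': "l' < k" by auto
    have "(W * U) $$ (l,l') = (\<Sum>j\<in>{0..<n}. ((a + (if l = c j then b else 0)) / g) * (if c j = l' then 1 else 0))"
      using l l' U W by (simp add: scalar_prod_def U_def W_def)
    also have "\<dots> = (\<Sum>j<n. if c j = l' then (a + (if l = l' then b else 0)) / g else 0)"
      by (intro sum.cong) auto
    also have "\<dots> = real m * ((a + (if l = l' then b else 0)) / g)" by (rule sum_cl[OF l'])
    finally show "(1\<^sub>m k + W * U) $$ (l,l') = mat k k (\<lambda>(l,l'). real m * a / g + (if l = l' then 1 + real m * b / g else 0)) $$ (l,l')"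
      using l l' U W g by (auto simp: field_simps)
  qed (use U W in auto)
  have y: "1 + real m * b / g \<noteq> 0" using g gb by (simp add: field_simps)
  have "det (Gm a b g) = g ^ n * det (1\<^sub>m k + W * U)"
    unfolding eq1 using sylvester[OF U W] U W by simp
  also have "\<dots> = g ^ n * ((1 + real m * b / g) ^ (k - 1) * ((1 + real m * b / g) + real k * (real m * a / g)))"
    unfolding eq2 by (subst det_sJ[OF y kpos]) simp
  also have "\<dots> = g^(n-k) * (g + real m * b)^(k-1) * (g + real m * b + real n * a)"
  proof -
    have "k \<le> n" using kdvd npos by (simp add: dvd_imp_le)
    hence nk: "n = (n - k) + (k - 1) + 1" using kpos by arith
    define Y where "Y = 1 + real m * b / g"
    define Z where "Z = (1 + real m * b / g) + real k * (real m * a / g)"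
    have gn: "g ^ n = g^(n-k) * g^(k-1) * g" by (subst nk) (simp add: power_add)
    have h1: "g^(k-1) * Y ^ (k - 1) = (g + real m * b)^(k-1)"
      unfolding Y_def by (simp add: power_mult_distrib[symmetric] distrib_left g)
    have h2: "g * Z = g + real m * b + real n * a"
      unfolding Z_def using g n_eq by (simp add: field_simps)
    have "g ^ n * (Y ^ (k - 1) * Z) = g^(n-k) * (g^(k-1) * Y ^ (k - 1)) * (g * Z)"
      unfolding gn by (simp only: ac_simps)
    also have "\<dots> = g^(n-k) * (g + real m * b)^(k-1) * (g + real m * b + real n * a)" unfolding h1 h2 ..
    finally show ?thesis unfolding Y_def Z_def .
  qed
  finally show ?thesis .
qed

lemma det_Gev: assumes "e2 \<noteq> 0" "e3 \<noteq> 0"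
  shows "det (Gev e1 e2 e3) = e1 * e2^(k-1) * e3^(n-k)"
proof -
  have "real m * ((e2 - e3) / real m) = e2 - e3" using m_pos by simp
  moreover have "real n * ((e1 - e2) / real n) = e1 - e2" using npos by simp
  ultimately show ?thesis unfolding Gev_def using assms by (subst det_Gm) (simp_all add: algebra_simps)
qed


lemma Gev_uminus: "- Gev a b g = Gev (-a) (-b) (-g)"
  by (rule eq_matI) (auto simp: minus_divide_left minus_diff_eq)

lemma char_matrix_Gev: "- char_matrix (Gev t1 t2 t3) x = Gev (x - t1) (x - t2) (x - t3)"
  unfolding char_matrix_def Gev_dims Gev_one Gev_smult Gev_add Gev_uminus by simp

lemma char_poly_Gev: "char_poly (Gev t1 t2 t3) = [:-t1,1:] * [:-t2,1:]^(k-1) * [:-t3,1:]^(n-k)"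
proof -
  define p where "p = char_poly (Gev t1 t2 t3) - [:-t1,1:] * [:-t2,1:]^(k-1) * [:-t3,1:]^(n-k)"
  have root: "poly p x = 0" if "x \<in> UNIV - {t2, t3}" for x
  proof -
    have "poly (char_poly (Gev t1 t2 t3)) x = det (Gev (x - t1) (x - t2) (x - t3))"
      unfolding char_poly_matrix[OF Gev_carrier] char_matrix_Gev ..
    also have "\<dots> = (x - t1) * (x - t2)^(k-1) * (x - t3)^(n-k)" using that by (subst det_Gev) auto
    finally have A: "poly (char_poly (Gev t1 t2 t3)) x = (x - t1) * (x - t2)^(k-1) * (x - t3)^(n-k)" .
    have "poly ([:-t1,1:] * [:-t2,1:]^(k-1) * [:-t3,1:]^(n-k)) x = (x - t1) * (x - t2)^(k-1) * (x - t3)^(n-k)"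
      by (simp add: poly_power left_diff_distrib)
    thus ?thesis unfolding p_def poly_diff A by (simp only: diff_self)
  qed
  have "p = 0"
  proof (rule ccontr)
    assume "p \<noteq> 0"
    hence "finite {x. poly p x = 0}" by (rule poly_roots_finite)
    moreover have "UNIV - {t2, t3} \<subseteq> {x. poly p x = 0}" using root by auto
    ultimately have "finite (UNIV - {t2, t3} :: real set)" by (rule finite_subset[rotated])
    thus False by (simp add: infinite_UNIV_char_0)
  qed
  thus ?thesis unfolding p_def by simp
qed


definition Lst :: "real \<Rightarrow> real \<Rightarrow> real \<Rightarrow> real list" where
  "Lst t1 t2 t3 = replicate (n-k) t3 @ (if t1 \<le> t2 then replicate (k-1) t2 @ [t1] else t1 # replicate (k-1) t2)"

lemma k_le_n: "k \<le> n" using kdvd npos by (simp add: dvd_imp_le)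

lemma sorted_rep: "sorted_wrt (\<ge>) (replicate j (x::real))" by (induction j) auto

lemma eigvals_Gev: assumes "t1 < t3" "t2 < t3"
  shows "eigvals_desc (Gev t1 t2 t3) = Lst t1 t2 t3"
proof (rule eigvals_desc_eqI)
  show "length (Lst t1 t2 t3) = dim_row (Gev t1 t2 t3)" unfolding Lst_def using k_le_n kpos by auto
  show "sorted_wrt (\<ge>) (Lst t1 t2 t3)" unfolding Lst_def using assms
    by (auto simp: sorted_wrt_append sorted_rep)
  have "prod_list (map (\<lambda>a. [:- a, 1:]) (Lst t1 t2 t3)) = [:-t3,1:]^(n-k) * ([:-t2,1:]^(k-1) * [:-t1,1:])"
    unfolding Lst_def by (auto simp: prod_list_replicate ac_simps)
  thus "char_poly (Gev t1 t2 t3) = prod_list (map (\<lambda>a. [:- a, 1:]) (Lst t1 t2 t3))"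
    unfolding char_poly_Gev by (simp add: ac_simps)
qed

lemma Lst_top: assumes "k < n" shows "Lst t1 t2 t3 ! (n - k - 1) = t3"
proof -
  have "n - k - 1 < n - k" using assms by arith
  thus ?thesis unfolding Lst_def by (simp add: nth_append)
qed

lemma Lst_gap: assumes "1 < k" shows "Lst t1 t2 t3 ! (n - k) = max t1 t2"
  unfolding Lst_def using assms by (cases "k - 1") (auto simp: nth_append)

lemma Lst_low: assumes "j < k" shows "Lst t1 t2 t3 ! (n - k + j) \<in> {t1, t2}"
  unfolding Lst_def using assms k_le_n by (auto simp: nth_append nth_Cons' )


lemma Theta_carrier: "Theta n k c \<in> carrier_mat n k" unfolding Theta_def by auto

lemma Theta_sq: "Theta n k c * transpose_mat (Theta n k c) = Gev 1 1 0"
proof (rule eq_matI)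
  fix i j assume "i < dim_row (Gev 1 1 0)" "j < dim_col (Gev 1 1 0)"
  hence i: "i < n" and j: "j < n" by auto
  define sq where "sq = sqrt (real k / real n)"
  have sq2: "sq * sq = 1 / real m" unfolding sq_def using n_eq kpos m_pos by simp
  have "(Theta n k c * transpose_mat (Theta n k c)) $$ (i,j) =
     (\<Sum>l\<in>{0..<k}. (if c i = l then sq else 0) * (if c j = l then sq else 0))"
    using i j unfolding sq_def by (simp add: Theta_def scalar_prod_def)
  also have "\<dots> = (\<Sum>l\<in>{0..<k}. if c i = l then (if c i = c j then sq * sq else 0) else 0)"
    by (intro sum.cong) auto
  also have "\<dots> = (if c i = c j then 1 / real m else 0)" using c_lt[OF i] sq2 by simp
  finally show "(Theta n k c * transpose_mat (Theta n k c)) $$ (i,j) = Gev 1 1 0 $$ (i,j)"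
    using i j by simp
qed (auto simp: Theta_def)

lemma Gev_smult_vec: assumes v: "v \<in> carrier_vec n"
  shows "Gev 0 0 t *\<^sub>v v = t \<cdot>\<^sub>v (Gev 0 0 1 *\<^sub>v v)"
proof -
  have "Gev 0 0 t = t \<cdot>\<^sub>m Gev 0 0 1" unfolding Gev_smult by simp
  thus ?thesis using v by (intro eq_vecI) auto
qed

lemma V_in_span: assumes V: "V \<in> carrier_mat n k" and VV: "transpose_mat V * V = 1\<^sub>m k"
  and ev: "\<And>j. j < k \<Longrightarrow> Gev t1 t2 t3 *\<^sub>v col V j = lam j \<cdot>\<^sub>v col V j"
  and ne: "\<And>j. j < k \<Longrightarrow> lam j \<noteq> t3"
  shows "\<exists>R \<in> carrier_mat k k. transpose_mat R * R = 1\<^sub>m k \<and> V = Theta n k c * R"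
proof -
  let ?T = "Theta n k c"
  have T: "?T \<in> carrier_mat n k" by (rule Theta_carrier)
  have colV: "Gev 1 1 0 *\<^sub>v col V j = col V j" if j: "j < k" for j
  proof -
    define v where "v = col V j"
    have v: "v \<in> carrier_vec n" unfolding v_def using V j by auto
    define w where "w = Gev 0 0 1 *\<^sub>v v"
    have w: "w \<in> carrier_vec n" unfolding w_def by (rule mult_mat_vec_carrier[OF Gev_carrier v])
    have "Gev 0 0 1 *\<^sub>v (Gev t1 t2 t3 *\<^sub>v v) = (Gev 0 0 1 * Gev t1 t2 t3) *\<^sub>v v"
      using v by (simp add: assoc_mult_mat_vec[of _ n n _ n])
    also have "\<dots> = t3 \<cdot>\<^sub>v w" unfolding Gev_mult w_def using Gev_smult_vec[OF v, of t3] by simp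
    finally have a: "Gev 0 0 1 *\<^sub>v (Gev t1 t2 t3 *\<^sub>v v) = t3 \<cdot>\<^sub>v w" .
    have b: "Gev 0 0 1 *\<^sub>v (Gev t1 t2 t3 *\<^sub>v v) = lam j \<cdot>\<^sub>v w"
      unfolding ev[OF j, folded v_def] w_def by (rule mult_mat_vec[OF Gev_carrier v])
    have w0: "w = 0\<^sub>v n"
    proof (rule eq_vecI)
      fix i assume "i < dim_vec (0\<^sub>v n :: real vec)"
      hence i: "i < n" by simp
      have "t3 * w $ i = lam j * w $ i" using arg_cong[OF a[unfolded b], of "\<lambda>x. x $ i"] i w by auto
      thus "w $ i = 0\<^sub>v n $ i" using ne[OF j] i by simp
    qed (use w in simp)
    have "Gev 1 1 0 = 1\<^sub>m n - Gev 0 0 1" unfolding Gev_one Gev_minus by simp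
    hence "Gev 1 1 0 *\<^sub>v v = v - w" unfolding w_def using v
      by (simp add: minus_mult_distrib_mat_vec[of _ n n])
    thus ?thesis unfolding v_def[symmetric] w0 using v by simp
  qed
  define R where "R = transpose_mat ?T * V"
  have R: "R \<in> carrier_mat k k" unfolding R_def using T V by auto
  have VTR: "V = ?T * R"
  proof (rule mat_col_eqI)
    fix j assume "j < dim_col (?T * R)"
    hence j: "j < k" using R T by auto
    have TT: "transpose_mat ?T \<in> carrier_mat k n" using T by simp
    have c2: "col R j = transpose_mat ?T *\<^sub>v col V j" unfolding R_def by (rule col_mult2[OF TT V j])
    have "col (?T * R) j = ?T *\<^sub>v (transpose_mat ?T *\<^sub>v col V j)"
      unfolding col_mult2[OF T R j] c2 ..
    also have "\<dots> = (?T * transpose_mat ?T) *\<^sub>v col V j"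
      using T V j by (simp add: assoc_mult_mat_vec[of _ n k _ n])
    also have "\<dots> = col V j" unfolding Theta_sq by (rule colV[OF j])
    finally show "col V j = col (?T * R) j" by simp
  qed (use R T V in auto)
  have "transpose_mat R * R = transpose_mat V * ?T * (transpose_mat ?T * V)"
    unfolding R_def using T V by (simp add: transpose_mult[of _ k n _ k])
  also have "\<dots> = transpose_mat V * (?T * (transpose_mat ?T * V))"
    using T V by (simp add: assoc_mult_mat[of _ k n _ k _ k])
  also have "\<dots> = 1\<^sub>m k" using VTR[unfolded R_def, symmetric] VV by simp
  finally show ?thesis using R VTR by blast
qed


lemma n_div_k: "real n / real k = real m" using n_eq kpos by simp

lemma EAp_Gm: "EAp n p eta c = Gm (p*eta) (p*(1-eta) - p*eta) (-(p*(1-eta)))"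
  by (rule eq_matI) (auto simp: EAp_def)

lemma EAm_Gm: "EAm n p eta c = Gm (p*(1-eta)) (p*eta - p*(1-eta)) (-(p*eta))"
  by (rule eq_matI) (auto simp: EAm_def)

lemma EAp_Gev: "EAp n p eta c = Gev (dp n k p eta) (p*(real m*(1-2*eta)) - p*(1-eta)) (-(p*(1-eta)))"
  unfolding EAp_Gm Gm_Gev dp_def unfolding n_div_k unfolding n_eq by (simp add: algebra_simps)

lemma EAm_Gev: "EAm n p eta c = Gev (dm n k p eta) (-(p*eta) - p*(real m*(1-2*eta))) (-(p*eta))"
  unfolding EAm_Gm Gm_Gev dm_def unfolding n_div_k unfolding n_eq by (simp add: algebra_simps)

lemma deg_Gm: "deg_mat (Gm a b g) = Gm 0 0 (real n * a + real m * b + g)"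
proof (rule eq_matI)
  fix i j assume "i < dim_row (Gm 0 0 (real n * a + real m * b + g))" "j < dim_col (Gm 0 0 (real n * a + real m * b + g))"
  hence i: "i < n" and j: "j < n" by auto
  have "(\<Sum>l<n. Gm a b g $$ (i,l)) = (\<Sum>l<n. a + (if c l = c i then b else 0) + (if l = i then g else 0))"
    using i by (intro sum.cong) auto
  also have "\<dots> = real n * a + real m * b + g" using i by (simp add: sum.distrib sum_same)
  finally show "deg_mat (Gm a b g) $$ (i,j) = Gm 0 0 (real n * a + real m * b + g) $$ (i,j)"
    using i j by (auto simp: deg_mat_def)
qed (auto simp: deg_mat_def)

lemma deg_Gev: "deg_mat (Gev e1 e2 e3) = Gev e1 e1 e1"
  unfolding Gev_def deg_Gm using npos m_pos by simp

lemma inv_sq_mult: "(x::real) > 0 \<Longrightarrow> 1 / sqrt x * y * (1 / sqrt x) = y / x"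
  by (simp add: field_simps)

lemma lap_Gev: assumes "e1 > 0"
  shows "sym_laplacian (deg_mat (Gev e1 e2 e3)) (Gev e1 e2 e3) = Gev 0 (1 - e2 / e1) (1 - e3 / e1)"
  unfolding sym_laplacian_def deg_Gev mat_inv_sqrt_Gev[OF assms assms assms] Gev_mult Gev_dims Gev_one Gev_minus
  using assms by (simp add: inv_sq_mult)

lemma T_Gev: assumes "l1 > 0" "l2 > 0" "l3 > 0"
  shows "mat_inv_sqrt (Gev l1 l2 l3) * Gev u1 u2 u3 * mat_inv_sqrt (Gev l1 l2 l3) = Gev (u1 / l1) (u2 / l2) (u3 / l3)"
  unfolding mat_inv_sqrt_Gev[OF assms] Gev_mult using assms by (simp add: inv_sq_mult)

lemma op_norm_Gev: assumes b: "\<bar>e1\<bar> \<le> M" "\<bar>e2\<bar> \<le> M" "\<bar>e3\<bar> \<le> M"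
  shows "op_norm (Gev e1 e2 e3) \<le> M"
  unfolding op_norm_def
proof (rule cSup_least)
  have "unit_vec n 0 \<in> carrier_vec (dim_col (Gev e1 e2 e3)) \<and> vnorm (unit_vec n 0) = 1"
    using npos by (auto simp: vnorm_def)
  thus "{vnorm (Gev e1 e2 e3 *\<^sub>v v) |v. v \<in> carrier_vec (dim_col (Gev e1 e2 e3)) \<and> vnorm v = 1} \<noteq> {}" by blast
  have M0: "M \<ge> 0" using b(1) by linarith
  fix x assume "x \<in> {vnorm (Gev e1 e2 e3 *\<^sub>v v) |v. v \<in> carrier_vec (dim_col (Gev e1 e2 e3)) \<and> vnorm v = 1}"
  then obtain v where v: "v \<in> carrier_vec n" "vnorm v = 1" and x: "x = vnorm (Gev e1 e2 e3 *\<^sub>v v)" by auto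
  have vv: "v \<bullet> v = 1" using v(2) self_scalar_nonneg[of v] unfolding vnorm_def by simp
  have "x = sqrt ((Gev e1 e2 e3 *\<^sub>v v) \<bullet> (Gev e1 e2 e3 *\<^sub>v v))" unfolding x vnorm_def ..
  also have "\<dots> \<le> sqrt (M^2)" by (intro real_sqrt_le_mono) (use Gev_norm_bound[OF v(1) b] vv in simp)
  also have "\<dots> = M" using M0 by simp
  finally show "x \<le> M" .
qed


lemma conclude:
  assumes T: "T = Gev t1 t2 t3" and on: "op_norm Ce \<le> max t1 t2"
    and b1: "t1 < B" and b2: "t2 < B" and B: "B \<le> t3" and k1: "1 < k" and kn: "k < n"
  shows "(\<forall>V. is_Vk n k T V \<longrightarrow> (\<exists>R \<in> carrier_mat k k. transpose_mat R * R = 1\<^sub>m k \<and> V = Theta n k c * R))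
     \<and> op_norm Ce < B
     \<and> eigvals_desc T ! (n - k - 1) - eigvals_desc T ! (n - k) > t3 - B"
proof (intro conjI allI impI)
  have E: "eigvals_desc (Gev t1 t2 t3) = Lst t1 t2 t3" using b1 b2 B by (intro eigvals_Gev) auto
  fix V assume "is_Vk n k T V"
  hence V: "V \<in> carrier_mat n k" and VV: "transpose_mat V * V = 1\<^sub>m k"
    and ev: "\<And>j. j < k \<Longrightarrow> Gev t1 t2 t3 *\<^sub>v col V j = (Lst t1 t2 t3 ! (n - k + j)) \<cdot>\<^sub>v col V j"
    unfolding is_Vk_def T E by auto
  show "\<exists>R \<in> carrier_mat k k. transpose_mat R * R = 1\<^sub>m k \<and> V = Theta n k c * R"
  proof (rule V_in_span[OF V VV ev])
    fix j assume "j < k"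
    from Lst_low[OF this, of t1 t2 t3] show "Lst t1 t2 t3 ! (n - k + j) \<noteq> t3" using b1 b2 B by auto
  qed
next
  show "op_norm Ce < B" using on b1 b2 by simp
next
  have E: "eigvals_desc T = Lst t1 t2 t3" unfolding T using b1 b2 B by (intro eigvals_Gev) auto
  show "eigvals_desc T ! (n - k - 1) - eigvals_desc T ! (n - k) > t3 - B"
    unfolding E Lst_top[OF kn] Lst_gap[OF k1] using b1 b2 by simp
qed

end

lemma K_clus: assumes "0 < k" shows "clus k 1 (\<lambda>_. 0)"
  by unfold_locales (use assms in auto)

lemma chi1_index: "i < k \<Longrightarrow> j < k \<Longrightarrow> chi1_outer k $$ (i,j) = 1 / real k"
  unfolding chi1_outer_def Let_def by (simp add: real_sqrt_mult[symmetric])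

lemma chi1_dims[simp]: "dim_row (chi1_outer k) = k" "dim_col (chi1_outer k) = k"
  unfolding chi1_outer_def Let_def by auto

lemma Cep_Gev: assumes k: "0 < k" and p: "p \<noteq> 0" and d: "dp n k p eta \<noteq> 0"
  shows "Cep n k p eta taum = clus.Gev k 1 (\<lambda>_. 0) taum
     (1 + taum + p / dp n k p eta * (1 - eta - real n / real k * (1 - 2*eta)))
     (1 + taum + p / dp n k p eta * (1 - eta - real n / real k * (1 - 2*eta)))"
proof -
  interpret K: clus k 1 "\<lambda>_. 0" by (rule K_clus[OF k])
  have Km: "K.m = k" unfolding K.m_def by simp
  define g where "g = 1 + taum + p / dp n k p eta * (1 - eta - real n / real k * (1 - 2*eta))"
  define a where "a = (- p * eta * real n / dp n k p eta) / real k"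
  have "Cep n k p eta taum = K.Gm a 0 g"
    by (rule eq_matI) (use k in \<open>auto simp: Cep_def chi1_index a_def g_def\<close>)
  also have "\<dots> = K.Gev (g + real k * a) g g" unfolding K.Gm_Gev Km by simp
  also have "g + real k * a = taum"
  proof -
    define Dp where "Dp = real n / real k * (1 - 2*eta) + real n * eta - (1 - eta)"
    have dpD: "dp n k p eta = p * Dp" unfolding dp_def Dp_def ..
    have D0: "Dp \<noteq> 0" using d dpD by auto
    have "g + real k * a = 1 + taum + (1 - eta - real n / real k * (1 - 2*eta) - eta * real n) / Dp"
      unfolding g_def a_def dpD using k p D0 by (simp add: field_simps)
    also have "1 - eta - real n / real k * (1 - 2*eta) - eta * real n = - Dp" unfolding Dp_def by simp
    finally show ?thesis using D0 by simp
  qed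
  finally show ?thesis unfolding g_def .
qed

lemma Cem_Gev: assumes k: "0 < k" and p: "p \<noteq> 0" and d: "dm n k p eta \<noteq> 0"
  shows "Cem n k p eta taup = clus.Gev k 1 (\<lambda>_. 0) taup
     (1 + taup + p / dm n k p eta * (eta + real n / real k * (1 - 2*eta)))
     (1 + taup + p / dm n k p eta * (eta + real n / real k * (1 - 2*eta)))"
proof -
  interpret K: clus k 1 "\<lambda>_. 0" by (rule K_clus[OF k])
  have Km: "K.m = k" unfolding K.m_def by simp
  define g where "g = 1 + taup + p / dm n k p eta * (eta + real n / real k * (1 - 2*eta))"
  define a where "a = (- p * (1 - eta) * real n / dm n k p eta) / real k"
  have "Cem n k p eta taup = K.Gm a 0 g"
    by (rule eq_matI) (use k in \<open>auto simp: Cem_def chi1_index a_def g_def\<close>)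
  also have "\<dots> = K.Gev (g + real k * a) g g" unfolding K.Gm_Gev Km by simp
  also have "g + real k * a = taup"
  proof -
    define Dm where "Dm = real n * (1 - eta) - real n / real k * (1 - 2*eta) - eta"
    have dmD: "dm n k p eta = p * Dm" unfolding dm_def Dm_def ..
    have D0: "Dm \<noteq> 0" using d dmD by auto
    have "g + real k * a = 1 + taup + (eta + real n / real k * (1 - 2*eta) - (1 - eta) * real n) / Dm"
      unfolding g_def a_def dmD using k p D0 by (simp add: field_simps)
    also have "eta + real n / real k * (1 - 2*eta) - (1 - eta) * real n = - Dm" unfolding Dm_def by simp
    finally show ?thesis using D0 by simp
  qed
  finally show ?thesis unfolding g_def .
qed



lemma basics:
  fixes p eta kk mm :: real
  assumes p: "0 < p" and eta: "0 \<le> eta" "eta < 1/2" and kk: "kk \<ge> 2" and mm: "mm * (1 - 2*eta) \<ge> 2 * (1 - eta)"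
  shows "mm \<ge> 2"
    and "p * (mm*(1-2*eta) + kk*mm*eta - (1-eta)) \<ge> p * (1 - eta)"
    and "p * (kk*mm*(1-eta) - mm*(1-2*eta) - eta) \<ge> 3/2 * p"
proof -
  have s: "1 - 2*eta > 0" using eta by simp
  have "mm * (1 - 2*eta) \<ge> 2 * (1 - 2*eta)" using mm eta by (smt (verit))
  thus m2: "mm \<ge> 2" using s by (rule mult_right_le_imp_le)
  have "mm*(1-2*eta) + kk*mm*eta - (1-eta) \<ge> 1 - eta"
  proof -
    have "kk*mm*eta \<ge> 0" using kk m2 eta by simp
    thus ?thesis using mm by (smt (verit))
  qed
  thus "p * (mm*(1-2*eta) + kk*mm*eta - (1-eta)) \<ge> p * (1 - eta)" using p by simp
  have "kk*(1-eta) \<ge> 2*(1-eta)" using kk eta by (intro mult_right_mono) auto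
  hence "kk*(1-eta) - (1-2*eta) \<ge> 1" by (smt (verit))
  hence "mm * (kk*(1-eta) - (1-2*eta)) \<ge> mm * 1" using m2 by (intro mult_left_mono) auto
  hence "kk*mm*(1-eta) - mm*(1-2*eta) - eta \<ge> 3/2" using m2 eta by (simp add: algebra_simps)
  thus "p * (kk*mm*(1-eta) - mm*(1-2*eta) - eta) \<ge> 3/2 * p" using p by simp
qed


lemma part1_ineq:
  fixes p eta kk mm x y dP dM :: real
  assumes p: "0 < p" and eta: "0 \<le> eta" "eta < 1/2" and kk: "kk \<ge> 2" and mm: "mm * (1 - 2*eta) \<ge> 2 * (1 - eta)"
    and x0: "0 \<le> x" and x1: "x < 3/2" and x2: "x < 3/16 * y" and x3: "x < 3 * (1 - eta) / (8 * (eta + (1 - 2*eta) / kk))"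
    and y: "0 < y"
    and dP: "dP = p * (mm*(1-2*eta) + kk*mm*eta - (1-eta))" and dM: "dM = p * (kk*mm*(1-eta) - mm*(1-2*eta) - eta)"
  shows "x / y < (1 - (1-2*eta)/(2*kk*(1-eta))) * ((1 + x + p*(1-eta)/dP) / (1 + y + p*eta/dM))"
    and "(1 + x + p*((1-eta) - mm*(1-2*eta))/dP) / (1 + y + p*(eta + mm*(1-2*eta))/dM)
         < (1 - (1-2*eta)/(2*kk*(1-eta))) * ((1 + x + p*(1-eta)/dP) / (1 + y + p*eta/dM))"
    and "0 \<le> (1 + x + p*((1-eta) - mm*(1-2*eta))/dP) / (1 + y + p*(eta + mm*(1-2*eta))/dM)"
proof -
  note b = basics[OF p eta kk mm]
  define s where "s = 1 - 2*eta"
  have s0: "s > 0" and s1: "s \<le> 1 - eta" using eta unfolding s_def by auto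
  have "dP \<ge> p * (1 - eta)" using b(2) dP by simp
  moreover have "p * (1 - eta) > 0" using p eta by simp
  ultimately have dP0: "dP > 0" by simp
  have dM0: "dM \<ge> 3/2 * p" using b(3) dM by simp
  hence dMp: "dM > 0" using p by simp
  have m2: "mm \<ge> 2" by (rule b(1))
  define D where "D = 2*kk*(1-eta)"
  have D0: "D > 0" unfolding D_def using kk eta by simp
  define del where "del = s / D"
  have del0: "del \<ge> 0" unfolding del_def using s0 D0 by simp
  have del1: "del \<le> 1/4"
  proof -
    have "2*kk*(1-eta) \<ge> 2*2*(1-eta)" using kk eta by (intro mult_right_mono) auto
    hence "4 * s \<le> D" unfolding D_def s_def using eta by simp
    thus ?thesis unfolding del_def using D0 by (simp add: divide_le_eq)
  qed
  define cc where "cc = 1 - del"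
  have cc: "cc \<ge> 3/4" using del1 unfolding cc_def by simp
  define l3 where "l3 = 1 + y + p*eta/dM"
  define u3 where "u3 = 1 + x + p*(1-eta)/dP"
  define u2 where "u2 = 1 + x + p*((1-eta) - mm*(1-2*eta))/dP"
  define l2 where "l2 = 1 + y + p*(eta + mm*(1-2*eta))/dM"
  have peta: "p*eta/dM \<le> 1/3"
  proof -
    have "p * eta \<le> p / 2" using p eta by simp
    also have "\<dots> \<le> dM / 3" using dM0 by simp
    finally show ?thesis using dMp by (simp add: divide_le_eq)
  qed
  have peta0: "p*eta/dM \<ge> 0" using p eta dMp by simp
  have l3a: "l3 \<le> 4/3 + y" and l3b: "l3 > 0" unfolding l3_def using peta peta0 y by auto
  have u3a: "u3 \<ge> 1 + x" unfolding u3_def using p eta dP0 by simp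
  have cdef: "(1 - (1-2*eta)/(2*kk*(1-eta))) = cc" unfolding cc_def del_def s_def D_def ..
  have "x * l3 \<le> x * (4/3 + y)" by (rule mult_left_mono[OF l3a x0])
  hence F1: "x * l3 \<le> 4/3 * x + x * y" by (simp add: algebra_simps)
  have "cc * u3 * y \<ge> 3/4 * (1 + x) * y"
    using cc u3a y x0 by (intro mult_right_mono mult_mono) auto
  hence F2: "cc * u3 * y \<ge> 3/4 * y + 3/4 * (x * y)" by (simp add: algebra_simps)
  have F3: "x * y < 3/2 * y" using x1 y by (intro mult_strict_right_mono) auto
  have key1: "x * l3 < cc * u3 * y" using F1 F2 F3 x2 y by linarith
  show "x / y < (1 - (1-2*eta)/(2*kk*(1-eta))) * ((1 + x + p*(1-eta)/dP) / (1 + y + p*eta/dM))"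
    unfolding cdef u3_def[symmetric] l3_def[symmetric] using key1 y l3b by (simp add: field_simps)
  define A where "A = p * mm * s / dP"
  define B where "B = p * mm * s / dM"
  have A0: "A > 0" unfolding A_def using p m2 s0 dP0 by simp
  have B0: "B \<ge> 0" unfolding B_def using p m2 s0 dMp by simp
  have u2x: "u2 = x + p * kk * mm * eta / dP"
  proof -
    have "1 + p*((1-eta) - mm*(1-2*eta))/dP = (dP + p*((1-eta) - mm*(1-2*eta)))/dP" using dP0 by (simp add: field_simps)
    also have "dP + p*((1-eta) - mm*(1-2*eta)) = p * kk * mm * eta" unfolding dP by (simp add: algebra_simps)
    finally show ?thesis unfolding u2_def by simp
  qed
  have u20: "u2 \<ge> 0" unfolding u2x using x0 p kk m2 eta dP0 by simp
  have u32: "u3 = u2 + A" unfolding u3_def u2_def A_def s_def using dP0 by (simp add: field_simps)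
  have l23: "l2 = l3 + B" unfolding l3_def l2_def B_def s_def using dMp by (simp add: field_simps)
  define P where "P = p * mm * s"
  have P0: "P > 0" unfolding P_def using p m2 s0 by simp
  have dPle: "dP \<le> p * mm * (s + kk * eta)"
    unfolding dP s_def using p eta by (simp add: algebra_simps)
  have xs: "x * (s + kk * eta) \<le> 3 * kk * (1 - eta) / 8"
  proof -
    have pos: "eta + (1 - 2*eta) / kk > 0" using eta kk s0 unfolding s_def by (simp add: add_nonneg_pos)
    have pos8: "8 * (eta + (1 - 2*eta) / kk) > 0" using pos by (simp only: zero_less_mult_iff) simp
    have "x * (8 * (eta + (1 - 2*eta) / kk)) < 3 * (1 - eta)" using x3 unfolding pos_less_divide_eq[OF pos8] .
    hence H: "x * (8 * (eta + (1 - 2*eta) / kk)) * kk < 3 * (1 - eta) * kk" using kk by simp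
    have E: "x * (8 * (eta + (1 - 2*eta) / kk)) * kk = 8 * (x * (s + kk * eta))"
      unfolding s_def using kk by (simp add: field_simps)
    have "8 * (x * (s + kk * eta)) < 3 * (1 - eta) * kk" using H unfolding E .
    thus ?thesis by (simp add: field_simps)
  qed
  have i1: "del * x * dP \<le> 3/16 * P"
  proof -
    have "del * x * dP \<le> del * x * (p * mm * (s + kk * eta))"
      using dPle del0 x0 by (intro mult_left_mono) auto
    also have "\<dots> = del * p * mm * (x * (s + kk * eta))" by (simp add: algebra_simps)
    also have "\<dots> \<le> del * p * mm * (3 * kk * (1 - eta) / 8)"
      using xs del0 p m2 by (intro mult_left_mono) auto
    also have "\<dots> = 3/16 * P" unfolding del_def D_def P_def using kk eta by (simp add: field_simps)
    finally show ?thesis .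
  qed
  have i2: "del * (p * kk * mm * eta) < P / 2"
  proof -
    have "del * (p * kk * mm * eta) = P * (eta / (2 * (1 - eta)))"
      unfolding del_def D_def P_def using kk eta by (simp add: field_simps)
    also have "\<dots> < P * (1/2)" using P0 eta by (intro mult_strict_left_mono) (auto simp: divide_less_eq)
    finally show ?thesis by simp
  qed
  have "del * u2 * dP = del * x * dP + del * (p * kk * mm * eta)"
    unfolding u2x using dP0 by (simp add: algebra_simps)
  also have "\<dots> < cc * P"
  proof -
    have "cc * P \<ge> 3/4 * P" using cc P0 by (intro mult_right_mono) auto
    thus ?thesis using i1 i2 P0 by linarith
  qed
  also have "cc * P = cc * A * dP" unfolding A_def P_def using dP0 by simp
  finally have "del * u2 * dP < cc * A * dP" .
  hence keyA: "del * u2 < cc * A" using dP0 by simp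
  have "u2 * l3 = cc * u2 * l3 + del * u2 * l3" unfolding cc_def by (simp add: algebra_simps)
  also have "\<dots> < cc * u2 * l3 + cc * A * l3" using keyA l3b by simp
  also have "\<dots> = cc * u3 * l3" unfolding u32 by (simp add: algebra_simps)
  also have "\<dots> \<le> cc * u3 * l2" unfolding l23 using cc u32 u20 A0 B0 by (intro mult_left_mono) auto
  finally have key2: "u2 * l3 < cc * u3 * l2" .
  have l2p: "l2 > 0" using l23 l3b B0 by simp
  show "(1 + x + p*((1-eta) - mm*(1-2*eta))/dP) / (1 + y + p*(eta + mm*(1-2*eta))/dM)
         < (1 - (1-2*eta)/(2*kk*(1-eta))) * ((1 + x + p*(1-eta)/dP) / (1 + y + p*eta/dM))"
    unfolding cdef u3_def[symmetric] l3_def[symmetric] u2_def[symmetric] l2_def[symmetric]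
    using key2 l2p l3b by (simp add: field_simps)
  show "0 \<le> (1 + x + p*((1-eta) - mm*(1-2*eta))/dP) / (1 + y + p*(eta + mm*(1-2*eta))/dM)"
    unfolding u2_def[symmetric] l2_def[symmetric] using u20 l2p by simp
qed


lemma part2_ineq:
  fixes p eta kk mm x y dP dM :: real
  assumes p: "0 < p" and eta: "0 \<le> eta" "eta < 1/2" and kk: "kk \<ge> 2" and mm: "mm * (1 - 2*eta) \<ge> 2 * (1 - eta)"
    and x0: "0 \<le> x" and x1: "x < ((1 - 2*eta)/kk - eta) / ((1 - 2*eta)/kk + eta)" and x2: "x < 1/2" and x3: "x < y / 8"
    and y: "0 < y"
    and dP: "dP = p * (mm*(1-2*eta) + kk*mm*eta - (1-eta))" and dM: "dM = p * (kk*mm*(1-eta) - mm*(1-2*eta) - eta)"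
  shows "x / y < (1 + x + p*(1-eta)/dP) / (2 * (1 + y + p*eta/dM))"
    and "(1 + x + p*((1-eta) - mm*(1-2*eta))/dP) / (1 + y + p*(eta + mm*(1-2*eta))/dM)
         < (1 + x + p*(1-eta)/dP) / (2 * (1 + y + p*eta/dM))"
    and "0 \<le> (1 + x + p*((1-eta) - mm*(1-2*eta))/dP) / (1 + y + p*(eta + mm*(1-2*eta))/dM)"
proof -
  note b = basics[OF p eta kk mm]
  define s where "s = 1 - 2*eta"
  have s0: "s > 0" and s1: "s \<le> 1 - eta" using eta unfolding s_def by auto
  have "dP \<ge> p * (1 - eta)" using b(2) dP by simp
  moreover have "p * (1 - eta) > 0" using p eta by simp
  ultimately have dP0: "dP > 0" by simp
  have dM0: "dM \<ge> 3/2 * p" using b(3) dM by simp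
  hence dMp: "dM > 0" using p by simp
  have m2: "mm \<ge> 2" by (rule b(1))
  define l3 where "l3 = 1 + y + p*eta/dM"
  define u3 where "u3 = 1 + x + p*(1-eta)/dP"
  define u2 where "u2 = 1 + x + p*((1-eta) - mm*(1-2*eta))/dP"
  define l2 where "l2 = 1 + y + p*(eta + mm*(1-2*eta))/dM"
  have peta: "p*eta/dM \<le> 1/3"
  proof -
    have "p * eta \<le> p / 2" using p eta by simp
    also have "\<dots> \<le> dM / 3" using dM0 by simp
    finally show ?thesis using dMp by (simp add: divide_le_eq)
  qed
  have peta0: "p*eta/dM \<ge> 0" using p eta dMp by simp
  have l3a: "l3 \<le> 4/3 + y" and l3b: "l3 > 0" unfolding l3_def using peta peta0 y by auto
  have u3a: "u3 \<ge> 1 + x" unfolding u3_def using p eta dP0 by simp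
  have "x * l3 \<le> x * (4/3 + y)" by (rule mult_left_mono[OF l3a x0])
  hence F1: "x * l3 \<le> 4/3 * x + x * y" by (simp add: algebra_simps)
  have "u3 * y \<ge> (1 + x) * y" using u3a y by (intro mult_right_mono) auto
  hence F2: "u3 * y \<ge> y + x * y" by (simp add: algebra_simps)
  have F3: "x * y < 1/2 * y" using x2 y by (intro mult_strict_right_mono) auto
  have key1: "x * (2 * l3) < u3 * y" using F1 F2 F3 x3 y by linarith
  show "x / y < (1 + x + p*(1-eta)/dP) / (2 * (1 + y + p*eta/dM))"
    unfolding u3_def[symmetric] l3_def[symmetric] using key1 y l3b by (simp add: field_simps)
  define A where "A = p * mm * s / dP"
  define B where "B = p * mm * s / dM"
  have A0: "A > 0" unfolding A_def using p m2 s0 dP0 by simp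
  have B0: "B \<ge> 0" unfolding B_def using p m2 s0 dMp by simp
  have u2x: "u2 = x + p * kk * mm * eta / dP"
  proof -
    have "1 + p*((1-eta) - mm*(1-2*eta))/dP = (dP + p*((1-eta) - mm*(1-2*eta)))/dP" using dP0 by (simp add: field_simps)
    also have "dP + p*((1-eta) - mm*(1-2*eta)) = p * kk * mm * eta" unfolding dP by (simp add: algebra_simps)
    finally show ?thesis unfolding u2_def by simp
  qed
  have u20: "u2 \<ge> 0" unfolding u2x using x0 p kk m2 eta dP0 by simp
  have u32: "u3 = u2 + A" unfolding u3_def u2_def A_def s_def using dP0 by (simp add: field_simps)
  have l23: "l2 = l3 + B" unfolding l3_def l2_def B_def s_def using dMp by (simp add: field_simps)
  define P where "P = p * mm * s"
  have P0: "P > 0" unfolding P_def using p m2 s0 by simp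
  have dPle: "dP \<le> p * mm * (s + kk * eta)"
    unfolding dP s_def using p eta by (simp add: algebra_simps)
  have xs: "x * (s + kk * eta) < s - kk * eta"
  proof -
    have pos: "(1 - 2*eta)/kk + eta > 0" using eta kk s0 unfolding s_def by (simp add: add_pos_nonneg)
    have H: "x * ((1 - 2*eta)/kk + eta) < (1 - 2*eta)/kk - eta" using x1 unfolding pos_less_divide_eq[OF pos] .
    hence "x * ((1 - 2*eta)/kk + eta) * kk < ((1 - 2*eta)/kk - eta) * kk" using kk by simp
    moreover have "x * ((1 - 2*eta)/kk + eta) * kk = x * (s + kk * eta)"
      unfolding s_def using kk by (simp add: field_simps)
    moreover have "((1 - 2*eta)/kk - eta) * kk = s - kk * eta"
      unfolding s_def using kk by (simp add: field_simps)
    ultimately show ?thesis by simp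
  qed
  have "x * dP \<le> x * (p * mm * (s + kk * eta))" using dPle x0 by (intro mult_left_mono) auto
  also have "\<dots> = p * mm * (x * (s + kk * eta))" by (simp add: algebra_simps)
  also have "\<dots> < p * mm * (s - kk * eta)" using xs p m2 by (intro mult_strict_left_mono) auto
  finally have G: "x * dP < p * mm * (s - kk * eta)" .
  have "u2 * dP = x * dP + p * kk * mm * eta" unfolding u2x using dP0 by (simp add: algebra_simps)
  also have "\<dots> < P" using G unfolding P_def by (simp add: algebra_simps)
  also have "P = A * dP" unfolding A_def P_def using dP0 by simp
  finally have "u2 * dP < A * dP" .
  hence keyA: "u2 < A" using dP0 by simp
  have "u2 * (2 * l3) = u2 * l3 + u2 * l3" by simp
  also have "\<dots> < u2 * l3 + A * l3" using keyA l3b by simp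
  also have "\<dots> = u3 * l3" unfolding u32 by (simp add: algebra_simps)
  also have "\<dots> \<le> u3 * l2" unfolding l23 using u32 u20 A0 B0 by (intro mult_left_mono) auto
  finally have key2: "u2 * (2 * l3) < u3 * l2" .
  have l2p: "l2 > 0" using l23 l3b B0 by simp
  show "(1 + x + p*((1-eta) - mm*(1-2*eta))/dP) / (1 + y + p*(eta + mm*(1-2*eta))/dM)
         < (1 + x + p*(1-eta)/dP) / (2 * (1 + y + p*eta/dM))"
    unfolding u3_def[symmetric] l3_def[symmetric] u2_def[symmetric] l2_def[symmetric]
    using key2 l2p l3b by (simp add: field_simps)
  show "0 \<le> (1 + x + p*((1-eta) - mm*(1-2*eta))/dP) / (1 + y + p*(eta + mm*(1-2*eta))/dM)"
    unfolding u2_def[symmetric] l2_def[symmetric] using u20 l2p by simp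
qed


theorem mainTheorem12:
  fixes n k :: nat and p eta :: real and c :: "nat \<Rightarrow> nat"
  assumes "n \<ge> 2" and "k \<ge> 2"
    and "0 < p" and "p \<le> 1" and "0 \<le> eta" and "eta < 1/2"
    and "k dvd n"
    and "\<forall>j<n. c j < k"
    and "\<forall>i<k. card {j. j < n \<and> c j = i} = n div k"
    and "real n \<ge> 2 * real k * (1 - eta) / (1 - 2*eta)"
  shows
   "(\<forall>taup taum :: real. taup > 0 \<and> taum \<ge> 0
        \<and> taup > 32 * eta * real k / (3 * (1 - 2*eta))
        \<and> taum < Min {3/2, 3/16 * taup, 3 * (1 - eta) / (8 * (eta + (1 - 2*eta) / real k))}
      \<longrightarrow>
        (\<forall>V. is_Vk n k (T_bar n p eta c taup taum) V \<longrightarrow>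
            (\<exists>R \<in> carrier_mat k k. transpose_mat R * R = 1\<^sub>m k \<and> V = Theta n k c * R))
      \<and> op_norm (Ce_mat n k p eta taup taum)
          < (1 - (1 - 2*eta) / (2 * real k * (1 - eta)))
            * (alphap n k p eta taum / alpham n k p eta taup)
      \<and> eigvals_desc (T_bar n p eta c taup taum) ! (n - k - 1)
          - eigvals_desc (T_bar n p eta c taup taum) ! (n - k)
          > (1 - 2*eta) / (2 * real k * (1 - eta))
            * (alphap n k p eta taum / alpham n k p eta taup))
    \<and>
    (eta < 1 / (3 * real k + 2) \<longrightarrow>
     (\<forall>taup taum :: real. taup > 0 \<and> taum \<ge> 0
        \<and> taum < Min {((1 - 2*eta) / real k - eta) / ((1 - 2*eta) / real k + eta), 1/2, taup / 8}
      \<longrightarrow>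
        (\<forall>V. is_Vk n k (T_bar n p eta c taup taum) V \<longrightarrow>
            (\<exists>R \<in> carrier_mat k k. transpose_mat R * R = 1\<^sub>m k \<and> V = Theta n k c * R))
      \<and> op_norm (Ce_mat n k p eta taup taum)
          < alphap n k p eta taum / (2 * alpham n k p eta taup)
      \<and> eigvals_desc (T_bar n p eta c taup taum) ! (n - k - 1)
          - eigvals_desc (T_bar n p eta c taup taum) ! (n - k)
          > alphap n k p eta taum / (2 * alpham n k p eta taup)))"
  proof -
  have k0: "0 < k" and n0: "0 < n" using assms by auto
  interpret C: clus n k c by unfold_locales (use assms in auto)
  interpret K: clus k 1 "\<lambda>_. 0" by (rule K_clus[OF k0])
  define mm where "mm = real C.m"
  have n_eq: "real n = real k * mm" unfolding mm_def by (rule C.n_eq)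
  have nk: "real n / real k = mm" unfolding mm_def by (rule C.n_div_k)
  have kk: "real k \<ge> 2" using assms by simp
  have p: "0 < p" and eta: "0 \<le> eta" "eta < 1/2" using assms by auto
  have s0: "1 - 2*eta > 0" using eta by simp
  have mmc: "mm * (1 - 2*eta) \<ge> 2 * (1 - eta)"
  proof -
    have "2 * real k * (1 - eta) \<le> real n * (1 - 2*eta)" using assms(10) s0 by (simp add: pos_divide_le_eq)
    hence "real k * (2 * (1 - eta)) \<le> real k * (mm * (1 - 2*eta))" unfolding n_eq by (simp add: algebra_simps)
    thus ?thesis using k0 by simp
  qed
  note bas = basics[OF p eta kk mmc]
  have dpE: "dp n k p eta = p * (mm*(1-2*eta) + real k*mm*eta - (1-eta))"
    unfolding dp_def unfolding nk unfolding n_eq ..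
  have dmE: "dm n k p eta = p * (real k*mm*(1-eta) - mm*(1-2*eta) - eta)"
    unfolding dm_def unfolding nk unfolding n_eq ..
  have "p * (1 - eta) > 0" using p eta by simp
  hence dp0: "dp n k p eta > 0" unfolding dpE using bas(2) by linarith
  have dm0: "dm n k p eta > 0" unfolding dmE using bas(3) p by simp
  have kn: "k < n"
  proof -
    have "real k * 2 \<le> real k * mm" using bas(1) k0 by simp
    hence "real k < real n" unfolding n_eq using k0 by simp
    thus ?thesis by simp
  qed
  have k1: "1 < k" using assms by simp
  define dP where "dP = dp n k p eta"
  define dM where "dM = dm n k p eta"
  have gen: "T_bar n p eta c taup taum = C.Gev (taum / taup)
        ((1 + taum + p*((1-eta) - mm*(1-2*eta))/dP) / (1 + taup + p*(eta + mm*(1-2*eta))/dM))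
        ((1 + taum + p*(1-eta)/dP) / (1 + taup + p*eta/dM))
      \<and> op_norm (Ce_mat n k p eta taup taum) \<le> max (taum / taup)
        ((1 + taum + p*((1-eta) - mm*(1-2*eta))/dP) / (1 + taup + p*(eta + mm*(1-2*eta))/dM))"
    if tp: "taup > 0" and tm: "taum \<ge> 0" and u20: "0 \<le> (1 + taum + p*((1-eta) - mm*(1-2*eta))/dP) / (1 + taup + p*(eta + mm*(1-2*eta))/dM)"
    for taup taum
  proof
    have dP0: "dP > 0" and dM0: "dM > 0" using dp0 dm0 unfolding dP_def dM_def by auto
    have pe: "p * eta / dM \<ge> 0" "p*(eta + mm*(1-2*eta))/dM \<ge> 0" using p eta dM0 s0 bas(1) by auto
    have Lp: "Lp_bar n p eta c = C.Gev 0 (1 - (p*(mm*(1-2*eta)) - p*(1-eta)) / dP) (1 - (-(p*(1-eta))) / dP)"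
      unfolding Lp_bar_def C.EAp_Gev mm_def[symmetric] dP_def[symmetric] by (rule C.lap_Gev[OF dP0])
    have Lm: "Lm_bar n p eta c = C.Gev 0 (1 - (-(p*eta) - p*(mm*(1-2*eta))) / dM) (1 - (-(p*eta)) / dM)"
      unfolding Lm_bar_def C.EAm_Gev mm_def[symmetric] dM_def[symmetric] by (rule C.lap_Gev[OF dM0])
    have Lp': "Lp_bar n p eta c + taum \<cdot>\<^sub>m 1\<^sub>m n = C.Gev taum (1 + taum + p*((1-eta) - mm*(1-2*eta))/dP) (1 + taum + p*(1-eta)/dP)"
      unfolding Lp C.Gev_one C.Gev_smult C.Gev_add using dP0 by (simp add: field_simps)
    have Lm': "Lm_bar n p eta c + taup \<cdot>\<^sub>m 1\<^sub>m n = C.Gev taup (1 + taup + p*(eta + mm*(1-2*eta))/dM) (1 + taup + p*eta/dM)"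
      unfolding Lm C.Gev_one C.Gev_smult C.Gev_add using dM0 by (simp add: field_simps)
    have l2: "1 + taup + p*(eta + mm*(1-2*eta))/dM > 0" and l3: "1 + taup + p*eta/dM > 0" using pe tp by auto
    show "T_bar n p eta c taup taum = C.Gev (taum / taup)
        ((1 + taum + p*((1-eta) - mm*(1-2*eta))/dP) / (1 + taup + p*(eta + mm*(1-2*eta))/dM))
        ((1 + taum + p*(1-eta)/dP) / (1 + taup + p*eta/dM))"
      unfolding T_bar_def Let_def Lp' Lm' by (rule C.T_Gev[OF tp l2 l3])
    have Cep: "Cep n k p eta taum = K.Gev taum (1 + taum + p*((1-eta) - mm*(1-2*eta))/dP) (1 + taum + p*((1-eta) - mm*(1-2*eta))/dP)"
      unfolding Cep_Gev[OF k0 p[THEN less_imp_neq, symmetric] dp0[THEN less_imp_neq, symmetric]] nk dP_def by simp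
    have Cem: "Cem n k p eta taup = K.Gev taup (1 + taup + p*(eta + mm*(1-2*eta))/dM) (1 + taup + p*(eta + mm*(1-2*eta))/dM)"
      unfolding Cem_Gev[OF k0 p[THEN less_imp_neq, symmetric] dm0[THEN less_imp_neq, symmetric]] nk dM_def by simp
    have "Ce_mat n k p eta taup taum = K.Gev (taum / taup)
        ((1 + taum + p*((1-eta) - mm*(1-2*eta))/dP) / (1 + taup + p*(eta + mm*(1-2*eta))/dM))
        ((1 + taum + p*((1-eta) - mm*(1-2*eta))/dP) / (1 + taup + p*(eta + mm*(1-2*eta))/dM))"
      unfolding Ce_mat_def Cep Cem by (rule K.T_Gev[OF tp l2 l2])
    also have "op_norm \<dots> \<le> max (taum / taup)
        ((1 + taum + p*((1-eta) - mm*(1-2*eta))/dP) / (1 + taup + p*(eta + mm*(1-2*eta))/dM))"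
      by (rule K.op_norm_Gev; (subst abs_of_nonneg[OF u20])?) (use tp tm in auto)
    finally show "op_norm (Ce_mat n k p eta taup taum) \<le> max (taum / taup)
        ((1 + taum + p*((1-eta) - mm*(1-2*eta))/dP) / (1 + taup + p*(eta + mm*(1-2*eta))/dM))" .
  qed
  have ap: "alphap n k p eta taum = 1 + taum + p*(1-eta)/dP" for taum unfolding alphap_def dP_def ..
  have am: "alpham n k p eta taup = 1 + taup + p*eta/dM" for taup unfolding alpham_def dM_def ..
  have t3pos: "(1 + taum + p*(1-eta)/dP) / (1 + taup + p*eta/dM) > 0" if "taup > 0" "taum \<ge> 0" for taup taum
    using that p eta dp0 dm0 unfolding dP_def dM_def by (intro divide_pos_pos add_pos_nonneg) auto
  show ?thesis
  proof (rule conjI; (intro allI impI)?)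
    fix taup taum :: real
    assume H: "taup > 0 \<and> taum \<ge> 0 \<and> taup > 32 * eta * real k / (3 * (1 - 2*eta))
        \<and> taum < Min {3/2, 3/16 * taup, 3 * (1 - eta) / (8 * (eta + (1 - 2*eta) / real k))}"
    hence tp: "taup > 0" and tm: "taum \<ge> 0" and x1: "taum < 3/2" and x2: "taum < 3/16 * taup"
      and x3: "taum < 3 * (1 - eta) / (8 * (eta + (1 - 2*eta) / real k))" by auto
    note I = part1_ineq[OF p eta kk mmc tm x1 x2 x3 tp dpE[folded dP_def] dmE[folded dM_def]]
    define t3 where "t3 = (1 + taum + p*(1-eta)/dP) / (1 + taup + p*eta/dM)"
    define del where "del = (1-2*eta)/(2*real k*(1-eta))"
    have del0: "del \<ge> 0" unfolding del_def using eta by simp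
    have t30: "t3 > 0" unfolding t3_def using t3pos[OF tp tm] .
    have G: "T_bar n p eta c taup taum = C.Gev (taum / taup)
        ((1 + taum + p*((1-eta) - mm*(1-2*eta))/dP) / (1 + taup + p*(eta + mm*(1-2*eta))/dM)) t3"
      and O: "op_norm (Ce_mat n k p eta taup taum) \<le> max (taum / taup)
        ((1 + taum + p*((1-eta) - mm*(1-2*eta))/dP) / (1 + taup + p*(eta + mm*(1-2*eta))/dM))"
      using gen[OF tp tm I(3)] unfolding t3_def by auto
    have B: "(1 - del) * t3 \<le> t3" using del0 t30 by simp
    note R = C.conclude[OF G O I(1)[folded t3_def del_def] I(2)[folded t3_def del_def] B k1 kn]
    have e: "t3 - (1 - del) * t3 = del * t3" by (simp add: algebra_simps)
    show "(\<forall>V. is_Vk n k (T_bar n p eta c taup taum) V \<longrightarrow>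
            (\<exists>R \<in> carrier_mat k k. transpose_mat R * R = 1\<^sub>m k \<and> V = Theta n k c * R))
      \<and> op_norm (Ce_mat n k p eta taup taum)
          < (1 - (1 - 2*eta) / (2 * real k * (1 - eta))) * (alphap n k p eta taum / alpham n k p eta taup)
      \<and> eigvals_desc (T_bar n p eta c taup taum) ! (n - k - 1)
          - eigvals_desc (T_bar n p eta c taup taum) ! (n - k)
          > (1 - 2*eta) / (2 * real k * (1 - eta)) * (alphap n k p eta taum / alpham n k p eta taup)"
      using R unfolding e unfolding ap am t3_def del_def by blast
  next
    fix taup taum :: real
    assume "eta < 1 / (3 * real k + 2)"
    assume H: "taup > 0 \<and> taum \<ge> 0
        \<and> taum < Min {((1 - 2*eta) / real k - eta) / ((1 - 2*eta) / real k + eta), 1/2, taup / 8}"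
    hence tp: "taup > 0" and tm: "taum \<ge> 0" and x1: "taum < ((1 - 2*eta) / real k - eta) / ((1 - 2*eta) / real k + eta)"
      and x2: "taum < 1/2" and x3: "taum < taup / 8" by auto
    note I = part2_ineq[OF p eta kk mmc tm x1 x2 x3 tp dpE[folded dP_def] dmE[folded dM_def]]
    define t3 where "t3 = (1 + taum + p*(1-eta)/dP) / (1 + taup + p*eta/dM)"
    have t30: "t3 > 0" unfolding t3_def using t3pos[OF tp tm] .
    have h: "(1 + taum + p*(1-eta)/dP) / (2 * (1 + taup + p*eta/dM)) = t3 / 2" unfolding t3_def by simp
    have G: "T_bar n p eta c taup taum = C.Gev (taum / taup)
        ((1 + taum + p*((1-eta) - mm*(1-2*eta))/dP) / (1 + taup + p*(eta + mm*(1-2*eta))/dM)) t3"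
      and O: "op_norm (Ce_mat n k p eta taup taum) \<le> max (taum / taup)
        ((1 + taum + p*((1-eta) - mm*(1-2*eta))/dP) / (1 + taup + p*(eta + mm*(1-2*eta))/dM))"
      using gen[OF tp tm I(3)] unfolding t3_def by auto
    have B: "t3 / 2 \<le> t3" using t30 by simp
    note R = C.conclude[OF G O I(1)[unfolded h] I(2)[unfolded h] B k1 kn]
    have e: "t3 - t3 / 2 = t3 / 2" by simp
    have h2: "alphap n k p eta taum / (2 * alpham n k p eta taup) = t3 / 2" unfolding ap am h[symmetric] ..
    show "(\<forall>V. is_Vk n k (T_bar n p eta c taup taum) V \<longrightarrow>
            (\<exists>R \<in> carrier_mat k k. transpose_mat R * R = 1\<^sub>m k \<and> V = Theta n k c * R))
      \<and> op_norm (Ce_mat n k p eta taup taum) < alphap n k p eta taum / (2 * alpham n k p eta taup)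
      \<and> eigvals_desc (T_bar n p eta c taup taum) ! (n - k - 1)
          - eigvals_desc (T_bar n p eta c taup taum) ! (n - k)
          > alphap n k p eta taum / (2 * alpham n k p eta taup)"
      using R unfolding h2 e by blast
  qed
qed

end
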